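(* Let $f:\mathbb{R}^n\to\mathbb{R}$ be twice continuously differentiable with $L$-Lipschitz gradient, and let $x^*$ be a strict saddle point of $f$. If $\{x_k\}_{k\ge0}$ is generated by the PBCD method with step size $0<\alpha<\frac1L$ from an initial point $x_0$ distributed according to $\nu$, then $$\mathbb{P}_\nu\left[\lim_{k\to\infty}x_k=x^*\right]=0.$$
   Context: $\|\nabla f(x)-\nabla f(y)\|\le L\|x-y\|$ for all $x,y$, with $L>0$. The variable is partitioned as $x=(x(1),\dots,x(p))$, $x(t)\in\mathbb{R}^{n_t}$, $\sum_t n_t=n$. PBCD (proximal block coordinate descent) method: given $x_k$, set $x_k^0=x_k$ and for $s=1,\dots,p$ let $x_k^s(s)$ be the (unique) minimizer over $u\in\mathbb{R}^{n_s}$ of $f(x_k^{s-1}(1),\dots,x_k^{s-1}(s-1),u,x_k^{s-1}(s+1),\dots,x_k^{s-1}(p))+\frac{1}{2\alpha}\|u-x_k^{s-1}(s)\|_2^2$, and $x_k^s(t)=x_k^{s-1}(t)$ for $t\ne s$; then $x_{k+1}=x_k^p$. A strict saddle is a point $x^*$ with $\nabla f(x^* )=0$ and $\lambda_{\min}(\nabla^2 f(x^* ))<0$. $\nu$ is a probability measure on $\mathbb{R}^n$ absolutely continuous with respect to Lebesgue measure. *)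

theory Defs
  imports "HOL-Analysis.Analysis" "HOL-Probability.Probability"
begin

definition block_dist2 :: "'n::finite set \<Rightarrow> real^'n \<Rightarrow> real^'n \<Rightarrow> real" where
  "block_dist2 S u x = (\<Sum>i\<in>S. (u$i - x$i)^2)"

definition block_step :: "(real^'n::finite \<Rightarrow> real) \<Rightarrow> real \<Rightarrow> 'n set \<Rightarrow> real^'n \<Rightarrow> real^'n" where
  "block_step f \<alpha> S x =
     (THE y. (\<forall>i. i \<notin> S \<longrightarrow> y$i = x$i) \<and>
        (\<forall>z. (\<forall>i. i \<notin> S \<longrightarrow> z$i = x$i) \<longrightarrow>
           f y + block_dist2 S y x / (2*\<alpha>) \<le> f z + block_dist2 S z x / (2*\<alpha>)))"

definition pbcd :: "(real^'n::finite \<Rightarrow> real) \<Rightarrow> real \<Rightarrow> 'n set list \<Rightarrow> real^'n \<Rightarrow> real^'n" where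
  "pbcd f \<alpha> B x = fold (block_step f \<alpha>) B x"

definition block_partition :: "'n::finite set list \<Rightarrow> bool" where
  "block_partition B \<longleftrightarrow> (\<forall>S\<in>set B. S \<noteq> {}) \<and> \<Union>(set B) = UNIV \<and>
     (\<forall>i<length B. \<forall>j<length B. i \<noteq> j \<longrightarrow> B!i \<inter> B!j = {})"

definition lambda_min :: "real^'n^'n \<Rightarrow> real" where
  "lambda_min A = Min {c. \<exists>v. v \<noteq> 0 \<and> A *v v = c *\<^sub>R v}"

end

theory Submission
  imports Defs
begin

definition proj :: "'n::finite set \<Rightarrow> real^'n \<Rightarrow> real^'n" where
  "proj S w = (\<chi> i. if i \<in> S then w$i else 0)"

lemma proj_component[simp]: "proj S w $ i = (if i \<in> S then w$i else 0)"
  by (simp add: proj_def)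

lemma norm_proj_le: "norm (proj S w) \<le> norm w"
  by (rule norm_le_componentwise_cart) auto

lemma proj_diff: "proj S (a - b) = proj S a - proj S b"
  by (simp add: vec_eq_iff)

lemma inner_cart: "(x::real^'n::finite) \<bullet> y = (\<Sum>i\<in>UNIV. x$i * y$i)"
  by (simp add: inner_vec_def)

lemma norm2_cart: "(norm (x::real^'n::finite))^2 = (\<Sum>i\<in>UNIV. (x$i)^2)"
  unfolding power2_norm_eq_inner inner_cart by (simp add: power2_eq_square)

lemma descent_lower:
  fixes f :: "real^'n::finite \<Rightarrow> real" and gradf :: "real^'n \<Rightarrow> real^'n"
  assumes grad: "\<And>x. (f has_derivative (\<lambda>h. gradf x \<bullet> h)) (at x)"
    and lip: "\<And>x y. norm (gradf x - gradf y) \<le> L * norm (x - y)"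
  shows "f z \<ge> f y + gradf y \<bullet> (z - y) - L/2 * (norm (z - y))^2"
proof -
  define w where "w = z - y"
  define \<phi> where "\<phi> t = f (y + t *\<^sub>R w) - t * (gradf y \<bullet> w) + L/2 * t^2 * (norm w)^2" for t
  have d: "(\<phi> has_derivative (\<lambda>h. h * (gradf (y + t *\<^sub>R w) \<bullet> w - gradf y \<bullet> w + L * t * (norm w)^2))) (at t within X)" for t X
  proof -
    have l: "((\<lambda>t. y + t *\<^sub>R w) has_derivative (\<lambda>h. h *\<^sub>R w)) (at t within X)"
      by (auto intro!: derivative_eq_intros)
    have c: "((\<lambda>t. f (y + t *\<^sub>R w)) has_derivative (\<lambda>h. gradf (y + t *\<^sub>R w) \<bullet> (h *\<^sub>R w))) (at t within X)"
      using has_derivative_compose[OF l has_derivative_at_withinI[OF grad]] by simp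
    show ?thesis unfolding \<phi>_def
      by (rule derivative_eq_intros c | simp)+ (simp add: algebra_simps power2_eq_square)
  qed
  have "\<phi> 1 - \<phi> 0 \<ge> 0"
  proof -
    obtain t where t: "t \<in> {0<..<1}" "\<phi> 1 - \<phi> 0 = (1 - 0) * (gradf (y + t *\<^sub>R w) \<bullet> w - gradf y \<bullet> w + L * t * (norm w)^2)"
      using mvt_simple[of 0 1 \<phi>, OF _ d] by auto
    have "\<bar>(gradf (y + t *\<^sub>R w) - gradf y) \<bullet> w\<bar> \<le> norm (gradf (y + t *\<^sub>R w) - gradf y) * norm w"
      by (rule Cauchy_Schwarz_ineq2)
    also have "\<dots> \<le> L * norm (t *\<^sub>R w) * norm w"
      using lip[of "y + t *\<^sub>R w" y] by (intro mult_right_mono) auto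
    also have "\<dots> = L * t * (norm w)^2" using t by (simp add: power2_eq_square)
    finally show ?thesis using t by (simp add: inner_diff_left)
  qed
  then show ?thesis unfolding \<phi>_def w_def by simp
qed

locale pb =
  fixes f :: "real^'n::finite \<Rightarrow> real"
    and gradf :: "real^'n \<Rightarrow> real^'n"
    and L \<alpha> :: real
  assumes grad: "\<And>x. (f has_derivative (\<lambda>h. gradf x \<bullet> h)) (at x)"
    and L_pos: "L > 0"
    and lip: "\<And>x y. norm (gradf x - gradf y) \<le> L * norm (x - y)"
    and a_pos: "0 < \<alpha>" and aL: "\<alpha> * L < 1"
begin

definition Tm :: "'n set \<Rightarrow> real^'n \<Rightarrow> real^'n \<Rightarrow> real^'n" where
  "Tm S x y = x - \<alpha> *\<^sub>R proj S (gradf y)"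

lemma Tm_contr: "dist (Tm S x y) (Tm S x y') \<le> (\<alpha> * L) * dist y y'"
proof -
  have "dist (Tm S x y) (Tm S x y') = \<alpha> * norm (proj S (gradf y - gradf y'))"
    using a_pos by (simp add: Tm_def dist_norm proj_diff algebra_simps norm_minus_commute flip: scaleR_diff_right)
  also have "\<dots> \<le> \<alpha> * (L * dist y y')"
    using norm_proj_le[of S "gradf y - gradf y'"] lip[of y y'] a_pos
    by (intro mult_left_mono) (auto simp: dist_norm)
  finally show ?thesis by simp
qed

lemma Tm_fix: "\<exists>!y. Tm S x y = y"
  using banach_fix_type[of "\<alpha> * L" "Tm S x"] Tm_contr a_pos L_pos aL by auto

lemma key_ineq:
  assumes y: "y = Tm S x y" and z: "\<forall>i. i \<notin> S \<longrightarrow> z$i = x$i"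
  shows "f z + block_dist2 S z x / (2*\<alpha>) - (f y + block_dist2 S y x / (2*\<alpha>))
          \<ge> (1/(2*\<alpha>) - L/2) * (norm (z - y))^2"
proof -
  define g where "g = gradf y"
  define w where "w = z - y"
  have yi: "y$i = x$i - \<alpha> * (if i \<in> S then g$i else 0)" for i
    using arg_cong[OF y, of "\<lambda>v. v$i"] by (simp add: Tm_def g_def)
  have w0: "i \<notin> S \<Longrightarrow> w$i = 0" for i using z yi by (simp add: w_def)
  have gw: "g \<bullet> w = (\<Sum>i\<in>S. g$i * w$i)"
    unfolding inner_cart by (rule sum.mono_neutral_right) (auto simp: w0)
  have nw: "(norm w)^2 = (\<Sum>i\<in>S. (w$i)^2)"
    unfolding norm2_cart by (rule sum.mono_neutral_right) (auto simp: w0)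
  have "block_dist2 S z x - block_dist2 S y x = (\<Sum>i\<in>S. (w$i)^2 - 2*\<alpha> * (g$i * w$i))"
    unfolding block_dist2_def sum_subtractf[symmetric]
    by (rule sum.cong) (auto simp: w_def yi power2_eq_square algebra_simps)
  also have "\<dots> = (norm w)^2 - 2*\<alpha>*(g \<bullet> w)"
    by (simp add: nw gw sum_subtractf sum_distrib_left)
  finally have bd: "block_dist2 S z x / (2*\<alpha>) - block_dist2 S y x / (2*\<alpha>) = (norm w)^2/(2*\<alpha>) - g \<bullet> w"
    using a_pos by (simp add: field_simps diff_divide_distrib[symmetric])
  have "f z \<ge> f y + g \<bullet> w - L/2 * (norm w)^2"
    using descent_lower[OF grad lip] by (simp add: g_def w_def)
  then show ?thesis using bd by (simp add: w_def[symmetric] algebra_simps)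
qed

lemma block_step_eq: "block_step f \<alpha> S x = y \<longleftrightarrow> y = Tm S x y"
proof -
  obtain y0 where y0: "Tm S x y0 = y0" and u: "\<And>y. Tm S x y = y \<Longrightarrow> y = y0"
    using Tm_fix[of S x] by metis
  let ?P = "\<lambda>y. (\<forall>i. i \<notin> S \<longrightarrow> y$i = x$i) \<and>
        (\<forall>z. (\<forall>i. i \<notin> S \<longrightarrow> z$i = x$i) \<longrightarrow>
           f y + block_dist2 S y x / (2*\<alpha>) \<le> f z + block_dist2 S z x / (2*\<alpha>))"
  have c: "1/(2*\<alpha>) - L/2 > 0"
    using aL a_pos by (simp add: field_simps)
  have off: "\<forall>i. i \<notin> S \<longrightarrow> y0$i = x$i"
  proof (intro allI impI)
    fix i assume "i \<notin> S" then show "y0$i = x$i"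
      using arg_cong[OF y0, of "\<lambda>v. v$i"] by (simp add: Tm_def)
  qed
  have P0: "?P y0"
  proof (intro conjI allI impI)
    show "\<And>i. i \<notin> S \<Longrightarrow> y0$i = x$i" using off by blast
  next
    fix z assume z: "\<forall>i. i \<notin> S \<longrightarrow> z$i = x$i"
    have "(1/(2*\<alpha>) - L/2) * (norm (z - y0))^2 \<ge> 0" using c by simp
    then show "f y0 + block_dist2 S y0 x / (2*\<alpha>) \<le> f z + block_dist2 S z x / (2*\<alpha>)"
      using key_ineq[OF y0[symmetric] z] by linarith
  qed
  have Pu: "y' = y0" if "?P y'" for y'
  proof -
    have "f y' + block_dist2 S y' x / (2*\<alpha>) \<le> f y0 + block_dist2 S y0 x / (2*\<alpha>)"
      using that off by blast
    moreover have "(1/(2*\<alpha>) - L/2) * (norm (y' - y0))^2 \<le> f y' + block_dist2 S y' x / (2*\<alpha>) - (f y0 + block_dist2 S y0 x / (2*\<alpha>))"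
      using key_ineq[OF y0[symmetric], of y'] that by blast
    ultimately have "(1/(2*\<alpha>) - L/2) * (norm (y' - y0))^2 \<le> 0"
      by linarith
    with c have "(norm (y' - y0))^2 \<le> 0"
      by (simp add: mult_le_0_iff)
    then show ?thesis by simp
  qed
  have "block_step f \<alpha> S x = y0"
    unfolding block_step_def using P0 Pu by (rule the_equality)
  then show ?thesis using y0 u by metis
qed

lemma block_step_fix: "block_step f \<alpha> S x = x - \<alpha> *\<^sub>R proj S (gradf (block_step f \<alpha> S x))"
  using block_step_eq[of S x "block_step f \<alpha> S x"] by (simp add: Tm_def)

definition psi :: "'n set \<Rightarrow> real^'n \<Rightarrow> real^'n" where
  "psi S y = y + \<alpha> *\<^sub>R proj S (gradf y)"

lemma psi_block: "psi S (block_step f \<alpha> S x) = x"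
  using block_step_fix[of S x] unfolding psi_def by (metis diff_add_cancel)

lemma psi_lip: "norm (psi S y - psi S y') \<le> (1 + \<alpha> * L) * norm (y - y')"
proof -
  have "norm (psi S y - psi S y') = norm ((y - y') + \<alpha> *\<^sub>R proj S (gradf y - gradf y'))"
    by (simp add: psi_def proj_diff algebra_simps)
  also have "\<dots> \<le> norm (y - y') + \<alpha> * norm (proj S (gradf y - gradf y'))"
    using a_pos norm_triangle_ineq by (metis abs_of_pos norm_scaleR)
  also have "\<dots> \<le> norm (y - y') + \<alpha> * (L * norm (y - y'))"
    using norm_proj_le[of S "gradf y - gradf y'"] lip[of y y'] a_pos
    by (intro add_left_mono mult_left_mono) auto
  finally show ?thesis by (simp add: algebra_simps)
qed

lemma block_lip: "norm (block_step f \<alpha> S x - block_step f \<alpha> S x') \<le> norm (x - x') / (1 - \<alpha> * L)"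
proof -
  let ?y = "block_step f \<alpha> S x" and ?y' = "block_step f \<alpha> S x'"
  have "norm (?y - ?y') = norm ((x - x') - \<alpha> *\<^sub>R proj S (gradf ?y - gradf ?y'))"
    by (subst (1 2) block_step_fix) (simp add: proj_diff algebra_simps)
  also have "\<dots> \<le> norm (x - x') + \<alpha> * norm (proj S (gradf ?y - gradf ?y'))"
    using a_pos norm_triangle_ineq4 by (metis abs_of_pos norm_scaleR)
  also have "\<dots> \<le> norm (x - x') + \<alpha> * (L * norm (?y - ?y'))"
    using norm_proj_le[of S "gradf ?y - gradf ?y'"] lip[of ?y ?y'] a_pos
    by (intro add_left_mono mult_left_mono) auto
  finally have "(1 - \<alpha> * L) * norm (?y - ?y') \<le> norm (x - x')" by (simp add: algebra_simps)
  then show ?thesis using aL by (simp add: field_simps)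
qed

lemma block_fixpt: "gradf p = 0 \<Longrightarrow> block_step f \<alpha> S p = p"
  using block_step_eq[of S p p] by (simp add: Tm_def vec_eq_iff)

end

lemma hess_approx:
  fixes f :: "real^'n::finite \<Rightarrow> real" and gradf :: "real^'n \<Rightarrow> real^'n" and H :: "real^'n^'n"
  assumes grad: "\<And>x. (f has_derivative (\<lambda>h. gradf x \<bullet> h)) (at x)"
    and d2: "(gradf has_derivative (\<lambda>h. H *v h)) (at x0)"
    and e: "e > 0"
  shows "\<exists>d>0. \<forall>s. 0 < s \<and> s < d \<longrightarrow>
     \<bar>(f (x0 + s *\<^sub>R u + s *\<^sub>R w) - f (x0 + s *\<^sub>R u) - f (x0 + s *\<^sub>R w) + f x0) - s^2 * (u \<bullet> (H *v w))\<bar> \<le> e * s^2"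
proof -
  define K where "K = norm u + norm w + 1"
  have K: "K > 0" "norm u \<le> K" "norm w \<le> K" unfolding K_def using norm_ge_zero[of u] norm_ge_zero[of w] by linarith+
  define e1 where "e1 = e / (4 * K * K)"
  have e1: "e1 > 0" using e K by (simp add: e1_def)
  obtain d where d: "d > 0" and dd: "\<And>y. norm (y - x0) < d \<Longrightarrow>
      norm (gradf y - gradf x0 - H *v (y - x0)) \<le> e1 * norm (y - x0)"
    using d2[unfolded has_derivative_at_alt] e1 by blast
  show ?thesis
  proof (intro exI[of _ "d / (2*K)"] conjI allI impI)
    show "d / (2*K) > 0" using d K by simp
    fix s assume s: "0 < s \<and> s < d / (2*K)"
    then have sK: "s * K < d / 2" using K by (simp add: field_simps)
    define h where "h t = f (x0 + t *\<^sub>R u + s *\<^sub>R w) - f (x0 + t *\<^sub>R u)" for t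
    define h' where "h' t = (gradf (x0 + t *\<^sub>R u + s *\<^sub>R w) - gradf (x0 + t *\<^sub>R u)) \<bullet> u" for t
    have hd: "(h has_derivative (\<lambda>r. r * h' t)) (at t within X)" for t X
    proof -
      have l1: "((\<lambda>t. x0 + t *\<^sub>R u + s *\<^sub>R w) has_derivative (\<lambda>r. r *\<^sub>R u)) (at t within X)"
        by (auto intro!: derivative_eq_intros)
      have l2: "((\<lambda>t. x0 + t *\<^sub>R u) has_derivative (\<lambda>r. r *\<^sub>R u)) (at t within X)"
        by (auto intro!: derivative_eq_intros)
      note c1 = has_derivative_compose[OF l1 has_derivative_at_withinI[OF grad]]
      note c2 = has_derivative_compose[OF l2 has_derivative_at_withinI[OF grad]]
      show ?thesis unfolding h_def h'_def
        using has_derivative_diff[OF c1 c2] by (simp add: inner_diff_left algebra_simps)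
    qed
    obtain \<tau> where \<tau>: "\<tau> \<in> {0<..<s}" "h s - h 0 = (s - 0) * h' \<tau>"
      using mvt_simple[of 0 s h "\<lambda>t r. r * h' t", OF _ hd] s by auto
    define y1 where "y1 = x0 + \<tau> *\<^sub>R u + s *\<^sub>R w"
    define y2 where "y2 = x0 + \<tau> *\<^sub>R u"
    have n1: "norm (y1 - x0) \<le> 2 * s * K"
    proof -
      have "norm (y1 - x0) \<le> norm (\<tau> *\<^sub>R u) + norm (s *\<^sub>R w)"
        unfolding y1_def using norm_triangle_ineq[of "\<tau> *\<^sub>R u" "s *\<^sub>R w"] by (simp add: add.assoc)
      also have "\<dots> \<le> s * K + s * K"
      proof (rule add_mono)
        show "norm (\<tau> *\<^sub>R u) \<le> s * K" using \<tau> K s mult_mono[of \<tau> s "norm u" K] by simp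
        show "norm (s *\<^sub>R w) \<le> s * K" using K s mult_left_mono[of "norm w" K s] by simp
      qed
      finally show ?thesis by (simp add: ac_simps)
    qed
    have n2: "norm (y2 - x0) \<le> 2 * s * K"
    proof -
      have "norm (y2 - x0) = \<tau> * norm u" using \<tau> by (simp add: y2_def)
      also have "\<dots> \<le> s * K" using \<tau> K s mult_mono[of \<tau> s "norm u" K] by simp
      finally show ?thesis using s K mult_pos_pos[of s K] by linarith
    qed
    have r1: "norm (gradf y1 - gradf x0 - H *v (y1 - x0)) \<le> e1 * (2 * s * K)"
      using dd[of y1] n1 sK e1 mult_left_mono[OF n1, of e1] by linarith
    have r2: "norm (gradf y2 - gradf x0 - H *v (y2 - x0)) \<le> e1 * (2 * s * K)"
      using dd[of y2] n2 sK e1 mult_left_mono[OF n2, of e1] by linarith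
    have eq: "gradf y1 - gradf y2 - s *\<^sub>R (H *v w) =
        (gradf y1 - gradf x0 - H *v (y1 - x0)) - (gradf y2 - gradf x0 - H *v (y2 - x0))"
      by (simp add: y1_def y2_def matrix_vector_mult_diff_distrib matrix_vector_right_distrib
          matrix_vector_mult_scaleR algebra_simps)
    have "norm (gradf y1 - gradf y2 - s *\<^sub>R (H *v w)) \<le> e1 * (2 * s * K) + e1 * (2 * s * K)"
      unfolding eq using r1 r2 norm_triangle_ineq4[of "gradf y1 - gradf x0 - H *v (y1 - x0)" "gradf y2 - gradf x0 - H *v (y2 - x0)"] by linarith
    moreover have "e1 * (2 * s * K) + e1 * (2 * s * K) = e * s / K"
      using K by (simp add: e1_def field_simps)
    ultimately have nb: "norm (gradf y1 - gradf y2 - s *\<^sub>R (H *v w)) \<le> e * s / K" by simp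
    have "\<bar>h' \<tau> - s * (u \<bullet> (H *v w))\<bar> = \<bar>(gradf y1 - gradf y2 - s *\<^sub>R (H *v w)) \<bullet> u\<bar>"
      by (simp add: h'_def y1_def y2_def inner_diff_left inner_diff_right inner_commute)
    also have "\<dots> \<le> norm (gradf y1 - gradf y2 - s *\<^sub>R (H *v w)) * norm u"
      by (rule Cauchy_Schwarz_ineq2)
    also have "\<dots> \<le> (e * s / K) * K"
      using nb K e s by (intro mult_mono) auto
    also have "\<dots> = e * s" using K by simp
    finally have hb: "\<bar>h' \<tau> - s * (u \<bullet> (H *v w))\<bar> \<le> e * s" .
    have "f (x0 + s *\<^sub>R u + s *\<^sub>R w) - f (x0 + s *\<^sub>R u) - f (x0 + s *\<^sub>R w) + f x0 = s * h' \<tau>"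
      using \<tau>(2) by (simp add: h_def algebra_simps)
    moreover have "s * h' \<tau> - s^2 * (u \<bullet> (H *v w)) = s * (h' \<tau> - s * (u \<bullet> (H *v w)))"
      by (simp add: power2_eq_square right_diff_distrib)
    ultimately have "\<bar>(f (x0 + s *\<^sub>R u + s *\<^sub>R w) - f (x0 + s *\<^sub>R u) - f (x0 + s *\<^sub>R w) + f x0) - s^2 * (u \<bullet> (H *v w))\<bar>
        = s * \<bar>h' \<tau> - s * (u \<bullet> (H *v w))\<bar>"
      using s by (simp add: abs_mult)
    also have "\<dots> \<le> s * (e * s)" using hb s by (intro mult_left_mono) auto
    finally show "\<bar>(f (x0 + s *\<^sub>R u + s *\<^sub>R w) - f (x0 + s *\<^sub>R u) - f (x0 + s *\<^sub>R w) + f x0) - s^2 * (u \<bullet> (H *v w))\<bar> \<le> e * s^2"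
      by (simp add: power2_eq_square mult.commute mult.left_commute)
  qed
qed

lemma hess_sym:
  fixes f :: "real^'n::finite \<Rightarrow> real" and gradf :: "real^'n \<Rightarrow> real^'n" and H :: "real^'n^'n"
  assumes grad: "\<And>x. (f has_derivative (\<lambda>h. gradf x \<bullet> h)) (at x)"
    and d2: "(gradf has_derivative (\<lambda>h. H *v h)) (at x0)"
  shows "u \<bullet> (H *v w) = w \<bullet> (H *v u)"
proof (rule ccontr)
  assume ne: "u \<bullet> (H *v w) \<noteq> w \<bullet> (H *v u)"
  define e where "e = \<bar>u \<bullet> (H *v w) - w \<bullet> (H *v u)\<bar> / 3"
  have e: "e > 0" using ne by (simp add: e_def)
  obtain d1 where d1: "d1 > 0" "\<And>s. 0 < s \<Longrightarrow> s < d1 \<Longrightarrow>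
     \<bar>(f (x0 + s *\<^sub>R u + s *\<^sub>R w) - f (x0 + s *\<^sub>R u) - f (x0 + s *\<^sub>R w) + f x0) - s^2 * (u \<bullet> (H *v w))\<bar> \<le> e * s^2"
    using hess_approx[OF grad d2 e, of u w] by blast
  obtain d2' where d2': "d2' > 0" "\<And>s. 0 < s \<Longrightarrow> s < d2' \<Longrightarrow>
     \<bar>(f (x0 + s *\<^sub>R w + s *\<^sub>R u) - f (x0 + s *\<^sub>R w) - f (x0 + s *\<^sub>R u) + f x0) - s^2 * (w \<bullet> (H *v u))\<bar> \<le> e * s^2"
    using hess_approx[OF grad d2 e, of w u] by blast
  define s where "s = min d1 d2' / 2"
  have s: "0 < s" "s < d1" "s < d2'" using d1 d2' by (auto simp: s_def)
  have "\<bar>s^2 * (u \<bullet> (H *v w)) - s^2 * (w \<bullet> (H *v u))\<bar> \<le> 2 * e * s^2"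
    using d1(2)[OF s(1,2)] d2'(2)[OF s(1,3)] by (simp add: algebra_simps)
  then have "s^2 * \<bar>u \<bullet> (H *v w) - w \<bullet> (H *v u)\<bar> \<le> s^2 * (2 * e)"
    by (metis abs_mult abs_power2 mult.commute right_diff_distrib)
  then have "\<bar>u \<bullet> (H *v w) - w \<bullet> (H *v u)\<bar> \<le> 2 * e"
    using s by (simp add: mult_le_cancel_left)
  then show False using e by (simp add: e_def)
qed

lemma eig_finite:
  fixes H :: "real^'n::finite^'n"
  assumes sym: "\<And>u w. u \<bullet> (H *v w) = w \<bullet> (H *v u)"
  shows "finite {c. \<exists>v. v \<noteq> 0 \<and> H *v v = c *\<^sub>R v}"
proof -
  define E where "E = {c. \<exists>v. v \<noteq> 0 \<and> H *v v = c *\<^sub>R v}"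
  define ev where "ev c = (SOME v. v \<noteq> 0 \<and> H *v v = c *\<^sub>R v)" for c
  have ev: "ev c \<noteq> 0 \<and> H *v ev c = c *\<^sub>R ev c" if "c \<in> E" for c
    using that unfolding E_def ev_def by (metis (mono_tags, lifting) mem_Collect_eq someI)
  have orth: "ev c \<bullet> ev d = 0" if "c \<in> E" "d \<in> E" "c \<noteq> d" for c d
  proof -
    have "c * (ev d \<bullet> ev c) = ev d \<bullet> (H *v ev c)" using ev[OF that(1)] by simp
    also have "\<dots> = ev c \<bullet> (H *v ev d)" by (rule sym)
    also have "\<dots> = d * (ev c \<bullet> ev d)" using ev[OF that(2)] by simp
    finally show ?thesis using that(3) by (simp add: inner_commute)
  qed
  have inj: "inj_on ev E"
  proof (rule inj_onI)
    fix c d assume cd: "c \<in> E" "d \<in> E" "ev c = ev d"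
    show "c = d"
    proof (rule ccontr)
      assume "c \<noteq> d"
      then have "ev c \<bullet> ev c = 0" using orth[OF cd(1,2)] cd(3) by simp
      then show False using ev[OF cd(1)] by simp
    qed
  qed
  have "pairwise orthogonal (ev ` E)"
    unfolding pairwise_def orthogonal_def using orth by fastforce
  moreover have "0 \<notin> ev ` E" using ev by force
  ultimately have "independent (ev ` E)" by (rule pairwise_orthogonal_independent)
  then have "finite (ev ` E)" using independent_bound by blast
  then show ?thesis using finite_imageD[OF _ inj] unfolding E_def by blast
qed

lemma eig_exists:
  fixes H :: "real^'n::finite^'n"
  assumes sym: "\<And>u w. u \<bullet> (H *v w) = w \<bullet> (H *v u)"
  shows "\<exists>c v. v \<noteq> 0 \<and> H *v v = c *\<^sub>R v"
proof -
  define q where "q w = w \<bullet> (H *v w)" for w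
  have "sphere (0::real^'n) 1 \<noteq> {}"
    by (metis (no_types) norm_axis_1 mem_sphere_0 empty_iff)
  moreover have "continuous_on (sphere 0 1) q"
    unfolding q_def by (intro continuous_intros)
  ultimately obtain u0 where u0: "u0 \<in> sphere 0 1" "\<And>y. y \<in> sphere 0 1 \<Longrightarrow> q u0 \<le> q y"
    using continuous_attains_inf[OF compact_sphere] by blast
  define m where "m = q u0"
  have u1: "u0 \<bullet> u0 = 1" using u0(1) by (simp add: dot_square_norm)
  have psd: "q w \<ge> m * (w \<bullet> w)" for w
  proof (cases "w = 0")
    case True then show ?thesis by (simp add: q_def)
  next
    case False
    define v where "v = w /\<^sub>R norm w"
    have "v \<in> sphere 0 1" using False by (simp add: v_def)
    then have "m \<le> q v" using u0 by (simp add: m_def)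
    also have "q v = q w / (norm w)^2" by (simp add: q_def v_def power2_eq_square divide_inverse matrix_vector_mult_scaleR)
    finally have "m * (norm w)^2 \<le> q w" using False by (simp add: field_simps)
    then show ?thesis by (simp add: power2_norm_eq_inner)
  qed
  define r where "r = H *v u0 - m *\<^sub>R u0"
  have ru: "u0 \<bullet> r = 0" by (simp add: r_def inner_diff_right u1 m_def q_def)
  have rH: "r \<bullet> (H *v u0) = r \<bullet> r"
    using ru by (simp add: r_def inner_diff_left inner_diff_right inner_commute)
  have expand: "q (u0 + t *\<^sub>R r) - m * ((u0 + t *\<^sub>R r) \<bullet> (u0 + t *\<^sub>R r)) = 2*t*(r \<bullet> r) + t^2 * (q r - m * (r \<bullet> r))" for t
  proof -
    have "q (u0 + t *\<^sub>R r) = q u0 + t * (u0 \<bullet> (H *v r)) + t * (r \<bullet> (H *v u0)) + t^2 * q r"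
      by (simp add: q_def matrix_vector_right_distrib matrix_vector_mult_scaleR inner_add_left inner_add_right power2_eq_square algebra_simps)
    also have "u0 \<bullet> (H *v r) = r \<bullet> (H *v u0)" by (rule sym)
    finally have "q (u0 + t *\<^sub>R r) = m + 2 * t * (r \<bullet> r) + t^2 * q r" using rH by (simp add: m_def)
    moreover have "(u0 + t *\<^sub>R r) \<bullet> (u0 + t *\<^sub>R r) = 1 + t^2 * (r \<bullet> r)"
      using ru u1 by (simp add: inner_add_left inner_add_right inner_commute power2_eq_square)
    ultimately show ?thesis by (simp add: algebra_simps)
  qed
  have "r = 0"
  proof (rule ccontr)
    assume "r \<noteq> 0"
    then have rr: "r \<bullet> r > 0" by simp
    define K where "K = \<bar>q r - m * (r \<bullet> r)\<bar> + 1"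
    define t where "t = - (r \<bullet> r) / K"
    have K: "K \<ge> 1" by (simp add: K_def)
    have t: "t < 0" using rr K by (simp add: t_def)
    have "0 \<le> 2*t*(r \<bullet> r) + t^2 * (q r - m * (r \<bullet> r))"
      using psd[of "u0 + t *\<^sub>R r"] expand[of t] by simp
    also have "\<dots> \<le> 2*t*(r \<bullet> r) + t^2 * K"
      by (intro add_left_mono mult_left_mono) (auto simp: K_def)
    also have "\<dots> = t * (r \<bullet> r)"
      using K by (simp add: t_def power2_eq_square field_simps)
    finally show False using mult_neg_pos[OF t rr] by linarith
  qed
  then have "H *v u0 = m *\<^sub>R u0" by (simp add: r_def)
  moreover have "u0 \<noteq> 0" using u0(1) by auto
  ultimately show ?thesis by blast
qed

lemma neg_eig:
  fixes H :: "real^'n::finite^'n"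
  assumes sym: "\<And>u w. u \<bullet> (H *v w) = w \<bullet> (H *v u)"
    and neg: "lambda_min H < 0"
  shows "\<exists>c v. c < 0 \<and> v \<noteq> 0 \<and> H *v v = c *\<^sub>R v"
proof -
  let ?E = "{c. \<exists>v. v \<noteq> 0 \<and> H *v v = c *\<^sub>R v}"
  have "?E \<noteq> {}" using eig_exists[OF sym] by blast
  then have "Min ?E \<in> ?E" using eig_finite[OF sym] by (rule Min_in[rotated])
  then show ?thesis using neg unfolding lambda_min_def by blast
qed

lemma kernel_bound:
  fixes H :: "real^'n::finite^'n"
  assumes sym: "\<And>u w. u \<bullet> (H *v w) = w \<bullet> (H *v u)"
  shows "\<exists>C>0. \<forall>e. - (e \<bullet> (H *v e)) \<le> C * (norm (H *v e))^2"
proof -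
  define K where "K = {a. H *v a = 0}"
  have subK: "subspace K" unfolding K_def subspace_def
    by (simp add: matrix_vector_right_distrib matrix_vector_mult_scaleR)
  define T where "T = sphere 0 1 \<inter> (\<Inter>a\<in>K. {z. a \<bullet> z = 0})"
  have cT: "compact T" unfolding T_def
    by (intro compact_Int_closed compact_sphere closed_INT) (auto intro: closed_hyperplane)
  obtain \<sigma> where sig: "\<sigma> > 0" "\<And>z. z \<in> T \<Longrightarrow> \<sigma> \<le> norm (H *v z)"
  proof (cases "T = {}")
    case True then show ?thesis using that[of 1] by auto
  next
    case False
    have "continuous_on T (\<lambda>z. norm (H *v z))"
      by (intro continuous_intros)
    then obtain z0 where z0: "z0 \<in> T" "\<And>z. z \<in> T \<Longrightarrow> norm (H *v z0) \<le> norm (H *v z)"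
      using continuous_attains_inf[OF cT False] by blast
    have "H *v z0 \<noteq> 0"
    proof
      assume "H *v z0 = 0"
      then have "z0 \<in> K" by (simp add: K_def)
      then have "z0 \<bullet> z0 = 0" using z0(1) by (auto simp: T_def)
      then show False using z0(1) by (auto simp: T_def)
    qed
    then show ?thesis using that[of "norm (H *v z0)"] z0 by auto
  qed
  show ?thesis
  proof (intro exI[of _ "1/\<sigma>"] conjI allI)
    show "1/\<sigma> > 0" using sig by simp
    fix e
    obtain y z where yz: "y \<in> span K" "\<And>w. w \<in> span K \<Longrightarrow> orthogonal z w" "e = y + z"
      using orthogonal_subspace_decomp_exists[of K e] by blast
    have "y \<in> K" using yz(1) subK by (metis span_eq_iff)
    then have Hy: "H *v y = 0" by (simp add: K_def)
    have zK: "\<And>a. a \<in> K \<Longrightarrow> a \<bullet> z = 0"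
      using yz(2) span_base by (fastforce simp: orthogonal_def inner_commute)
    have He: "H *v e = H *v z" using Hy yz(3) by (simp add: matrix_vector_right_distrib)
    have ee: "e \<bullet> (H *v e) = z \<bullet> (H *v z)"
    proof -
      have "y \<bullet> (H *v z) = z \<bullet> (H *v y)" by (rule sym)
      then show ?thesis using He Hy yz(3) by (simp add: inner_add_left)
    qed
    have zb: "\<sigma> * norm z \<le> norm (H *v z)"
    proof (cases "z = 0")
      case True then show ?thesis by simp
    next
      case False
      have "z /\<^sub>R norm z \<in> T" using False zK by (auto simp: T_def)
      then have "\<sigma> \<le> norm (H *v (z /\<^sub>R norm z))" by (rule sig(2))
      also have "\<dots> = norm (H *v z) / norm z"
        by (simp add: matrix_vector_mult_scaleR divide_inverse)
      finally show ?thesis using False by (simp add: field_simps)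
    qed
    have "- (z \<bullet> (H *v z)) \<le> norm z * norm (H *v z)"
      using Cauchy_Schwarz_ineq2[of z "H *v z"] by linarith
    also have "\<dots> \<le> (norm (H *v z) / \<sigma>) * norm (H *v z)"
      using zb sig by (intro mult_right_mono) (auto simp: field_simps)
    finally show "- (e \<bullet> (H *v e)) \<le> 1/\<sigma> * (norm (H *v e))^2"
      using ee He by (simp add: power2_eq_square)
  qed
qed

lemma proj_supp_inner: "proj S d = d \<Longrightarrow> d \<bullet> w = d \<bullet> proj S w"
  by (metis (no_types, lifting) inner_cart proj_component sum.cong mult_zero_left)

lemma proj_idem: "proj S (proj S w) = proj S w"
  by (simp add: vec_eq_iff)

lemma proj_scale: "proj S (c *\<^sub>R w) = c *\<^sub>R proj S w"
  by (simp add: vec_eq_iff)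

lemma proj_add: "proj S (a + b) = proj S a + proj S b"
  by (simp add: vec_eq_iff)

lemma norm3: "norm (- a - b - c) \<le> norm a + norm b + norm (c::'a::real_normed_vector)"
proof -
  have "norm (- a - b - c) = norm (a + b + c)"
  proof -
    have "- a - b - c = - (a + b + c)" by (simp add: algebra_simps)
    then show ?thesis by (simp only: norm_minus_cancel)
  qed
  also have "\<dots> \<le> norm (a + b) + norm c" by (rule norm_triangle_ineq)
  also have "\<dots> \<le> norm a + norm b + norm c" using norm_triangle_ineq[of a b] by simp
  finally show ?thesis .
qed

lemma dyn:
  fixes H :: "real^'n::finite^'n" and e r :: "nat \<Rightarrow> real^'n" and Sb :: "nat \<Rightarrow> 'n set"
  assumes sym: "\<And>u w. u \<bullet> (H *v w) = w \<bullet> (H *v u)"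
    and Hb: "\<And>w. norm (H *v w) \<le> L * norm w"
    and part: "\<And>w. norm w \<le> (\<Sum>j<p. norm (proj (Sb j) w))"
    and step: "\<And>j. j < p \<Longrightarrow> e (Suc j) = e j - \<alpha> *\<^sub>R proj (Sb j) (H *v e (Suc j) + r j)"
    and rb: "\<And>j. j < p \<Longrightarrow> norm (r j) \<le> \<epsilon> * norm (e (Suc j))"
    and a: "\<alpha> > 0" and L: "L \<ge> 0" and eps: "\<epsilon> \<ge> 0"
  defines "A \<equiv> (\<Sum>j<p. norm (e (Suc j) - e j))"
    and "R \<equiv> (\<Sum>j<p. norm (r j))"
  shows "e p \<bullet> (H *v e p) - e 0 \<bullet> (H *v e 0) \<le> - (2/\<alpha> - L) * (\<Sum>j<p. (norm (e (Suc j) - e j))^2) + 2 * A * R"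
    and "\<And>j. j \<le> p \<Longrightarrow> norm (e j - e 0) \<le> A"
    and "norm (H *v e 0) \<le> (1/\<alpha> + p * L) * A + R"
    and "R \<le> p * \<epsilon> * (norm (e 0) + A)"
proof -
  define \<delta> where "\<delta> j = e (Suc j) - e j" for j
  have A0: "A \<ge> 0" unfolding A_def by (simp add: sum_nonneg)
  have R0: "R \<ge> 0" unfolding R_def by (simp add: sum_nonneg)
  have dl: "\<delta> j = - \<alpha> *\<^sub>R proj (Sb j) (H *v e (Suc j) + r j)" if "j < p" for j
  proof -
    define X where "X = \<alpha> *\<^sub>R proj (Sb j) (H *v e (Suc j) + r j)"
    have eX: "e (Suc j) = e j - X" using step[OF that] unfolding X_def by simp
    have "\<delta> j = - X" unfolding \<delta>_def by (subst eX) simp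
    then show ?thesis unfolding X_def by simp
  qed
  have dproj: "proj (Sb j) (\<delta> j) = \<delta> j" if "j < p" for j
    using dl[OF that] by (simp add: vec_eq_iff)
  have pH: "proj (Sb j) (H *v e (Suc j)) = - (1/\<alpha>) *\<^sub>R \<delta> j - proj (Sb j) (r j)" if "j < p" for j
    using dl[OF that] a by (simp add: vec_eq_iff)
  have rj: "norm (r j) \<le> R" if "j < p" for j
    unfolding R_def using that by (intro member_le_sum) auto
  have stepV: "e (Suc j) \<bullet> (H *v e (Suc j)) - e j \<bullet> (H *v e j) \<le> - (2/\<alpha> - L) * (norm (\<delta> j))^2 + 2 * norm (\<delta> j) * norm (r j)"
    if j: "j < p" for j
  proof -
    have ej: "e j = (e (Suc j)) - (\<delta> j)" by (simp add: \<delta>_def)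
    have dH: "(\<delta> j) \<bullet> (H *v (e (Suc j))) = - ((norm (\<delta> j))^2) / \<alpha> - (\<delta> j) \<bullet> r j"
    proof -
      have "(\<delta> j) \<bullet> (H *v (e (Suc j))) = (\<delta> j) \<bullet> proj (Sb j) (H *v (e (Suc j)))"
        by (rule proj_supp_inner[OF dproj[OF j]])
      also have "\<dots> = - (1/\<alpha>) * ((\<delta> j) \<bullet> (\<delta> j)) - (\<delta> j) \<bullet> proj (Sb j) (r j)"
        by (simp add: pH[OF j] inner_diff_right)
      also have "(\<delta> j) \<bullet> proj (Sb j) (r j) = (\<delta> j) \<bullet> r j"
        by (rule proj_supp_inner[OF dproj[OF j], symmetric])
      finally show ?thesis by (simp add: power2_norm_eq_inner)
    qed
    have "e j \<bullet> (H *v e j) = (e (Suc j)) \<bullet> (H *v (e (Suc j))) - 2 * ((\<delta> j) \<bullet> (H *v (e (Suc j)))) + (\<delta> j) \<bullet> (H *v (\<delta> j))"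
    proof -
      have "(e (Suc j)) \<bullet> (H *v (\<delta> j)) = (\<delta> j) \<bullet> (H *v (e (Suc j)))" by (rule sym)
      then show ?thesis unfolding ej
        by (simp add: matrix_vector_mult_diff_distrib inner_diff_left inner_diff_right)
    qed
    then have "(e (Suc j)) \<bullet> (H *v (e (Suc j))) - e j \<bullet> (H *v e j) = - 2 * (norm (\<delta> j))^2 / \<alpha> - 2 * ((\<delta> j) \<bullet> r j) - (\<delta> j) \<bullet> (H *v (\<delta> j))"
      using dH by simp
    moreover have "- ((\<delta> j) \<bullet> (H *v (\<delta> j))) \<le> L * (norm (\<delta> j))^2"
    proof -
      have "- ((\<delta> j) \<bullet> (H *v (\<delta> j))) \<le> norm (\<delta> j) * norm (H *v (\<delta> j))"
        using Cauchy_Schwarz_ineq2[of "\<delta> j" "H *v (\<delta> j)"] by linarith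
      also have "\<dots> \<le> norm (\<delta> j) * (L * norm (\<delta> j))" by (intro mult_left_mono Hb) auto
      finally show ?thesis by (simp add: power2_eq_square algebra_simps)
    qed
    moreover have "- ((\<delta> j) \<bullet> r j) \<le> norm (\<delta> j) * norm (r j)"
      using Cauchy_Schwarz_ineq2[of "\<delta> j" "r j"] by linarith
    ultimately show ?thesis by (simp add: algebra_simps diff_divide_distrib add_divide_distrib)
  qed
  have "e p \<bullet> (H *v e p) - e 0 \<bullet> (H *v e 0) = (\<Sum>j<p. e (Suc j) \<bullet> (H *v e (Suc j)) - e j \<bullet> (H *v e j))"
    by (rule sum_lessThan_telescope[symmetric])
  also have "\<dots> \<le> (\<Sum>j<p. - (2/\<alpha> - L) * (norm (\<delta> j))^2 + 2 * norm (\<delta> j) * norm (r j))"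
    by (rule sum_mono) (rule stepV, simp)
  also have "\<dots> = - (2/\<alpha> - L) * (\<Sum>j<p. (norm (\<delta> j))^2) + 2 * (\<Sum>j<p. norm (\<delta> j) * norm (r j))"
    by (simp add: sum.distrib sum_distrib_left mult.assoc)
  also have "(\<Sum>j<p. norm (\<delta> j) * norm (r j)) \<le> (\<Sum>j<p. norm (\<delta> j) * R)"
    by (rule sum_mono) (auto intro: mult_left_mono rj)
  also have "(\<Sum>j<p. norm (\<delta> j) * R) = A * R"
    by (simp add: A_def \<delta>_def sum_distrib_right)
  finally show "e p \<bullet> (H *v e p) - e 0 \<bullet> (H *v e 0) \<le> - (2/\<alpha> - L) * (\<Sum>j<p. (norm (e (Suc j) - e j))^2) + 2 * A * R"
    by (simp add: \<delta>_def mult.assoc)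
  have eb: "norm (e j - e 0) \<le> A" if "j \<le> p" for j
  proof -
    have "e j - e 0 = (\<Sum>i<j. \<delta> i)" unfolding \<delta>_def by (rule sum_lessThan_telescope[symmetric])
    then have "norm (e j - e 0) \<le> (\<Sum>i<j. norm (\<delta> i))" by (simp add: norm_sum)
    also have "\<dots> \<le> (\<Sum>i<p. norm (\<delta> i))"
      using that by (intro sum_mono2) auto
    finally show ?thesis by (simp add: A_def \<delta>_def)
  qed
  then show "\<And>j. j \<le> p \<Longrightarrow> norm (e j - e 0) \<le> A" .
  have cj: "norm (proj (Sb j) (H *v e 0)) \<le> norm (\<delta> j) / \<alpha> + norm (r j) + L * A" if j: "j < p" for j
  proof -
    have "proj (Sb j) (H *v e 0) = proj (Sb j) (H *v e (Suc j)) - proj (Sb j) (H *v (e (Suc j) - e 0))"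
      by (simp add: matrix_vector_mult_diff_distrib proj_diff)
    also have "\<dots> = - (1/\<alpha>) *\<^sub>R \<delta> j - proj (Sb j) (r j) - proj (Sb j) (H *v (e (Suc j) - e 0))"
      by (simp add: pH[OF j])
    finally have "norm (proj (Sb j) (H *v e 0)) \<le> norm ((1/\<alpha>) *\<^sub>R \<delta> j) + norm (proj (Sb j) (r j)) + norm (proj (Sb j) (H *v (e (Suc j) - e 0)))"
      using norm3[of "(1/\<alpha>) *\<^sub>R \<delta> j" "proj (Sb j) (r j)" "proj (Sb j) (H *v (e (Suc j) - e 0))"] by simp
    also have "\<dots> \<le> norm (\<delta> j) / \<alpha> + norm (r j) + L * A"
    proof (intro add_mono)
      show "norm ((1/\<alpha>) *\<^sub>R \<delta> j) \<le> norm (\<delta> j) / \<alpha>" using a by simp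
      show "norm (proj (Sb j) (r j)) \<le> norm (r j)" by (rule norm_proj_le)
      have "norm (proj (Sb j) (H *v (e (Suc j) - e 0))) \<le> norm (H *v (e (Suc j) - e 0))" by (rule norm_proj_le)
      also have "\<dots> \<le> L * norm (e (Suc j) - e 0)" by (rule Hb)
      also have "\<dots> \<le> L * A" using eb[of "Suc j"] j L by (intro mult_left_mono) auto
      finally show "norm (proj (Sb j) (H *v (e (Suc j) - e 0))) \<le> L * A" .
    qed
    finally show ?thesis .
  qed
  have "norm (H *v e 0) \<le> (\<Sum>j<p. norm (proj (Sb j) (H *v e 0)))" by (rule part)
  also have "\<dots> \<le> (\<Sum>j<p. norm (\<delta> j) / \<alpha> + norm (r j) + L * A)"
    by (rule sum_mono) (rule cj, simp)
  also have "\<dots> = A / \<alpha> + R + p * L * A"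
    by (simp add: sum.distrib A_def R_def \<delta>_def sum_divide_distrib)
  finally show "norm (H *v e 0) \<le> (1/\<alpha> + p * L) * A + R"
    by (simp add: algebra_simps)
  have "R \<le> (\<Sum>j<p. \<epsilon> * (norm (e 0) + A))"
    unfolding R_def
  proof (rule sum_mono)
    fix j assume "j \<in> {..<p}"
    then have j: "j < p" by simp
    have "norm (e (Suc j)) \<le> norm (e 0) + norm (e (Suc j) - e 0)"
      by (metis add.commute diff_add_cancel norm_triangle_ineq)
    also have "\<dots> \<le> norm (e 0) + A" using eb[of "Suc j"] j by simp
    finally show "norm (r j) \<le> \<epsilon> * (norm (e 0) + A)"
      using rb[OF j] eps by (meson mult_left_mono order_trans)
  qed
  then show "R \<le> p * \<epsilon> * (norm (e 0) + A)" by simp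
qed

lemma alg:
  fixes A R X G \<gamma> c1 C1 K1 p \<epsilon> :: real
  assumes A: "A \<ge> 0" and R: "R \<ge> 0" and X: "X \<ge> 0" and C1: "C1 > 0" and K1: "K1 \<ge> 0"
    and p: "p \<ge> 1" and c1: "c1 > 0"
    and h1: "G \<ge> c1*A^2 - 2*A*R - 2*\<gamma>*X*A - \<gamma>*A^2"
    and h2: "\<gamma>*X^2 \<le> C1*(K1*A + R)^2"
    and h3: "R \<le> p*\<epsilon>*(X + A)"
    and g: "0 < \<gamma>" "\<gamma> \<le> 1" "\<gamma> \<le> c1/8" "\<gamma> \<le> c1 * (c1/(8*(4*C1*K1^2+1))) / 8"
    and e: "0 \<le> \<epsilon>" "4*C1*p^2*\<epsilon>^2 \<le> \<gamma>/2" "p*\<epsilon>*((4*C1*K1^2/\<gamma> + 1) + 3) \<le> c1/8"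
  shows "G \<ge> (c1 / (2*(4*C1*K1^2/\<gamma> + 1))) * X^2"
proof -
  define D where "D = 4*C1*K1^2/\<gamma> + 1"
  define \<theta> where "\<theta> = c1/(8*(4*C1*K1^2+1))"
  have D1: "D \<ge> 1" using C1 g by (simp add: D_def)
  have cp0: "4*C1*K1^2 \<ge> 0" using C1 by simp
  then have cp: "4*C1*K1^2+1 > 0" by linarith
  have th: "\<theta> > 0" using cp c1 by (simp add: \<theta>_def)
  have pe: "p*\<epsilon> \<ge> 0" using p e by simp
  have R2: "R^2 \<le> 2*p^2*\<epsilon>^2*(X^2 + A^2)"
  proof -
    have "R^2 \<le> (p*\<epsilon>*(X + A))^2" using h3 R by (intro power_mono) auto
    also have "\<dots> = p^2*\<epsilon>^2*(X + A)^2" by (simp add: power_mult_distrib)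
    also have "\<dots> \<le> p^2*\<epsilon>^2*(2*(X^2 + A^2))"
    proof (rule mult_left_mono)
      show "(X + A)^2 \<le> 2*(X^2 + A^2)" using zero_le_power2[of "X - A"] by (simp add: power2_sum power2_diff algebra_simps)
    qed simp
    finally show ?thesis by (simp add: algebra_simps)
  qed
  have KA: "(K1*A + R)^2 \<le> 2*K1^2*A^2 + 2*R^2"
  proof -
    have "(K1*A+R)^2 + (K1*A - R)^2 = 2*(K1*A)^2 + 2*R^2" by (simp add: power2_sum power2_diff)
    moreover have "(K1*A)^2 = K1^2*A^2" by (simp add: power_mult_distrib)
    ultimately show ?thesis using zero_le_power2[of "K1*A - R"] by linarith
  qed
  have "\<gamma>*X^2 \<le> C1*(2*K1^2*A^2 + 2*R^2)"
    using h2 KA C1 by (meson mult_left_mono less_imp_le order_trans)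
  also have "\<dots> \<le> C1*(2*K1^2*A^2 + 2*(2*p^2*\<epsilon>^2*(X^2 + A^2)))"
    using R2 C1 by (intro mult_left_mono add_left_mono) auto
  also have "\<dots> = 2*C1*K1^2*A^2 + (4*C1*p^2*\<epsilon>^2)*(X^2 + A^2)"
    by (simp add: algebra_simps)
  also have "\<dots> \<le> 2*C1*K1^2*A^2 + (\<gamma>/2)*(X^2 + A^2)"
    using e(2) by (intro add_left_mono mult_right_mono) auto
  finally have "(\<gamma>/2)*X^2 \<le> (2*C1*K1^2 + \<gamma>/2)*A^2" by (simp add: algebra_simps)
  then have XD: "X^2 \<le> D*A^2" using g by (simp add: D_def field_simps)
  have t1: "2*A*R \<le> p*\<epsilon>*(D+3)*A^2"
  proof -
    have "2*A*R \<le> 2*A*(p*\<epsilon>*(X + A))" using h3 A by (intro mult_left_mono) auto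
    also have "\<dots> = p*\<epsilon>*(2*X*A) + 2*p*\<epsilon>*A^2" by (simp add: algebra_simps power2_eq_square)
    also have "\<dots> \<le> p*\<epsilon>*(X^2 + A^2) + 2*p*\<epsilon>*A^2"
      using pe zero_le_power2[of "X - A"] by (intro add_right_mono mult_left_mono) (auto simp: power2_diff)
    also have "\<dots> \<le> p*\<epsilon>*(D*A^2 + A^2) + 2*p*\<epsilon>*A^2"
      using pe XD by (intro add_right_mono mult_left_mono) auto
    finally show ?thesis by (simp add: algebra_simps)
  qed
  have t1': "p*\<epsilon>*(D+3)*A^2 \<le> (c1/8)*A^2"
    using e(3) by (intro mult_right_mono) (auto simp: D_def)
  have t2: "2*\<gamma>*X*A \<le> \<gamma>*\<theta>*X^2 + (\<gamma>/\<theta>)*A^2"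
  proof -
    have "0 \<le> (sqrt \<theta> * X - A / sqrt \<theta>)^2" by simp
    also have "\<dots> = \<theta>*X^2 - 2*X*A + A^2/\<theta>"
      using th by (simp add: power2_diff power_mult_distrib power_divide)
    finally have "2*X*A \<le> \<theta>*X^2 + A^2/\<theta>" by simp
    then have "\<gamma>*(2*X*A) \<le> \<gamma>*(\<theta>*X^2 + A^2/\<theta>)" using g by (intro mult_left_mono) auto
    then show ?thesis by (simp add: algebra_simps)
  qed
  have t2a: "\<gamma>*\<theta>*X^2 \<le> (c1/8)*A^2"
  proof -
    have "\<gamma>*\<theta>*X^2 \<le> \<gamma>*\<theta>*(D*A^2)" using XD g th by (intro mult_left_mono) auto
    also have "\<dots> = \<theta>*(\<gamma>*D)*A^2" by simp
    also have "\<gamma>*D = 4*C1*K1^2 + \<gamma>" using g by (simp add: D_def field_simps)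
    also have "\<theta>*(4*C1*K1^2 + \<gamma>)*A^2 \<le> \<theta>*(4*C1*K1^2 + 1)*A^2"
      using g th by (intro mult_right_mono mult_left_mono) auto
    also have "\<theta>*(4*C1*K1^2 + 1) = c1/8"
      using cp unfolding \<theta>_def by (metis divide_divide_eq_left nonzero_mult_div_cancel_right order_less_irrefl times_divide_eq_left)
    finally show ?thesis .
  qed
  have t2b: "(\<gamma>/\<theta>)*A^2 \<le> (c1/8)*A^2"
  proof -
    have "\<gamma> \<le> c1 * \<theta> / 8" using g(4) unfolding \<theta>_def .
    then have "\<gamma>/\<theta> \<le> c1/8" using th by (simp add: pos_divide_le_eq)
    then show ?thesis by (intro mult_right_mono) auto
  qed
  have t3: "\<gamma>*A^2 \<le> (c1/8)*A^2" using g by (intro mult_right_mono) auto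
  have "G \<ge> (c1/2)*A^2"
    using h1 t1 t1' t2 t2a t2b t3 by linarith
  moreover have "(c1 / (2*D)) * X^2 \<le> (c1/2)*A^2"
  proof -
    have "(c1 / (2*D)) * X^2 \<le> (c1 / (2*D)) * (D*A^2)"
      using XD c1 D1 by (intro mult_left_mono) auto
    also have "\<dots> = (c1/2)*A^2" using D1 by (simp add: field_simps)
    finally show ?thesis .
  qed
  ultimately show ?thesis unfolding D_def by linarith
qed

locale pb2 = pb f gradf L \<alpha>
  for f :: "real^'n::finite \<Rightarrow> real" and gradf L \<alpha> +
  fixes hessf :: "real^'n \<Rightarrow> real^'n^'n" and B :: "'n set list" and xs :: "real^'n"
  assumes hess: "\<And>x. (gradf has_derivative (\<lambda>h. hessf x *v h)) (at x)"
    and hess_cont: "continuous_on UNIV hessf"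
    and part: "block_partition B"
    and crit: "gradf xs = 0"
begin

abbreviation "H \<equiv> hessf xs"

lemma Hsym: "u \<bullet> (H *v w) = w \<bullet> (H *v u)"
  by (rule hess_sym[OF grad hess])

lemma linz:
  assumes e: "\<epsilon> > 0"
  shows "\<exists>\<rho>>0. \<forall>a b. a \<in> cball xs \<rho> \<longrightarrow> b \<in> cball xs \<rho> \<longrightarrow>
     norm (gradf a - gradf b - H *v (a - b)) \<le> \<epsilon> * norm (a - b)"
proof -
  define c where "c = real CARD('n) * real CARD('n)"
  have c: "c > 0" by (simp add: c_def)
  obtain \<rho> where \<rho>: "\<rho> > 0" "\<And>x. dist x xs < \<rho> \<Longrightarrow> dist (hessf x) H < \<epsilon> / c"
    using hess_cont e c unfolding continuous_on_iff by (metis UNIV_I divide_pos_pos)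
  show ?thesis
  proof (intro exI[of _ "\<rho>/2"] conjI allI impI)
    show "\<rho>/2 > 0" using \<rho> by simp
    fix a b assume a: "a \<in> cball xs (\<rho>/2)" and b: "b \<in> cball xs (\<rho>/2)"
    have on: "onorm (\<lambda>h. hessf x *v h - H *v h) \<le> \<epsilon>" if x: "x \<in> cball xs (\<rho>/2)" for x
    proof -
      have "dist (hessf x) H < \<epsilon> / c" using \<rho>(2)[of x] x \<rho>(1) by (simp add: dist_commute)
      then have nb: "norm (hessf x - H) \<le> \<epsilon> / c" by (simp add: dist_norm)
      have "(\<lambda>h. hessf x *v h - H *v h) = (*v) (hessf x - H)"
        by (simp add: fun_eq_iff matrix_vector_mult_diff_rdistrib)
      moreover have "onorm ((*v) (hessf x - H)) \<le> real CARD('n) * real CARD('n) * (\<epsilon> / c)"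
      proof (rule onorm_le_matrix_component)
        fix i j
        have "\<bar>(hessf x - H)$i$j\<bar> \<le> norm ((hessf x - H)$i)" by (rule component_le_norm_cart)
        also have "\<dots> \<le> norm (hessf x - H)" by (rule Finite_Cartesian_Product.norm_nth_le)
        finally show "\<bar>(hessf x - H)$i$j\<bar> \<le> \<epsilon> / c" using nb by linarith
      qed
      ultimately show ?thesis using c by (simp add: c_def)
    qed
    have "norm (gradf a - gradf b - H *v (a - b)) \<le> norm (a - b) * \<epsilon>"
    proof (rule differentiable_bound_linearization[where S="cball xs (\<rho>/2)" and f'="\<lambda>x h. hessf x *v h"])
      fix t :: real assume t: "t \<in> {0..1}"
      have "(1 - t) *\<^sub>R b + t *\<^sub>R a \<in> cball xs (\<rho>/2)"
        using convex_cball[of xs "\<rho>/2", unfolded convex_alt] a b t by auto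
      moreover have "b + t *\<^sub>R (a - b) = (1 - t) *\<^sub>R b + t *\<^sub>R a" by (simp add: algebra_simps)
      ultimately show "b + t *\<^sub>R (a - b) \<in> cball xs (\<rho>/2)" by simp
    next
      show "\<And>x. x \<in> cball xs (\<rho>/2) \<Longrightarrow> (gradf has_derivative (\<lambda>h. hessf x *v h)) (at x within cball xs (\<rho>/2))"
        using hess by (rule has_derivative_at_withinI)
      show "\<And>x. x \<in> cball xs (\<rho>/2) \<Longrightarrow> onorm ((\<lambda>h. hessf x *v h) - (\<lambda>h. H *v h)) \<le> \<epsilon>"
        using on by (simp add: fun_diff_def)
      show "xs \<in> cball xs (\<rho>/2)" using \<rho> by simp
    qed
    then show "norm (gradf a - gradf b - H *v (a - b)) \<le> \<epsilon> * norm (a - b)" by (simp add: mult.commute)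
  qed
qed

lemma Hb: "norm (H *v w) \<le> L * norm w"
proof (cases "w = 0")
  case True then show ?thesis by simp
next
  case False
  show ?thesis
  proof (rule field_le_epsilon)
    fix d :: real assume d: "d > 0"
    define \<epsilon> where "\<epsilon> = d / norm w"
    have \<epsilon>: "\<epsilon> > 0" using d False by (simp add: \<epsilon>_def)
    obtain \<rho> where \<rho>: "\<rho> > 0" "\<And>a b. a \<in> cball xs \<rho> \<Longrightarrow> b \<in> cball xs \<rho> \<Longrightarrow>
        norm (gradf a - gradf b - H *v (a - b)) \<le> \<epsilon> * norm (a - b)"
      using linz[OF \<epsilon>] by blast
    define s where "s = \<rho> / norm w"
    have s: "s > 0" using \<rho> False by (simp add: s_def)
    have a: "xs + s *\<^sub>R w \<in> cball xs \<rho>" using s False \<rho>(1) by (simp add: s_def dist_norm)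
    have "norm (s *\<^sub>R (H *v w)) \<le> norm (gradf (xs + s *\<^sub>R w) - gradf xs) + \<epsilon> * norm (s *\<^sub>R w)"
    proof -
      have "norm (gradf (xs + s *\<^sub>R w) - gradf xs - H *v (s *\<^sub>R w)) \<le> \<epsilon> * norm (s *\<^sub>R w)"
        using \<rho>(2)[OF a, of xs] \<rho>(1) by simp
      then show ?thesis using norm_triangle_ineq3[of "gradf (xs + s *\<^sub>R w) - gradf xs" "H *v (s *\<^sub>R w)"]
        by (simp add: matrix_vector_mult_scaleR norm_minus_commute)
    qed
    also have "\<dots> \<le> L * norm (s *\<^sub>R w) + \<epsilon> * norm (s *\<^sub>R w)"
      using lip[of "xs + s *\<^sub>R w" xs] by simp
    finally have "s * norm (H *v w) \<le> s * (L * norm w + d)"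
      using s False by (simp add: \<epsilon>_def algebra_simps)
    then show "norm (H *v w) \<le> L * norm w + d" using s by simp
  qed
qed

abbreviation "p \<equiv> length B"

lemma part_unique: "\<exists>!j. j < p \<and> i \<in> B!j"
proof -
  have "i \<in> \<Union>(set B)" using part by (simp add: block_partition_def)
  then obtain j where j: "j < p" "i \<in> B!j" by (metis UnionE in_set_conv_nth)
  moreover have "j' = j" if "j' < p" "i \<in> B!j'" for j'
    using part j that unfolding block_partition_def by blast
  ultimately show ?thesis by blast
qed

lemma p_pos: "p \<ge> 1"
  using part_unique[of undefined] by (cases B) auto

lemma part_sum: "(\<Sum>j<p. proj (B!j) w) = w"
proof (subst vec_eq_iff, intro allI)
  fix i
  obtain j0 where j0: "j0 < p" "i \<in> B!j0" and u: "\<And>j. j < p \<Longrightarrow> i \<in> B!j \<Longrightarrow> j = j0"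
    using part_unique[of i] by blast
  have "(\<Sum>j<p. proj (B!j) w) $ i = (\<Sum>j<p. if i \<in> B!j then w$i else 0)"
    by (simp add: sum_component)
  also have "\<dots> = (\<Sum>j<p. if j = j0 then w$i else 0)"
  proof (rule sum.cong[OF refl])
    fix j assume "j \<in> {..<p}"
    then have "j < p" by simp
    show "(if i \<in> B!j then w$i else 0) = (if j = j0 then w$i else 0)"
    proof (cases "j = j0")
      case True then show ?thesis using j0 by simp
    next
      case False then have "i \<notin> B!j" using u \<open>j < p\<close> by blast
      then show ?thesis using False by simp
    qed
  qed
  also have "\<dots> = w$i" using j0 by simp
  finally show "(\<Sum>j<p. proj (B!j) w) $ i = w $ i" .
qed

lemma part_norm: "norm w \<le> (\<Sum>j<p. norm (proj (B!j) w))"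
proof -
  have "norm w = norm (\<Sum>j<p. proj (B!j) w)" by (simp add: part_sum)
  also have "\<dots> \<le> (\<Sum>j<p. norm (proj (B!j) w))" by (rule norm_sum)
  finally show ?thesis .
qed

definition zs :: "real^'n \<Rightarrow> nat \<Rightarrow> real^'n" where
  "zs x j = fold (block_step f \<alpha>) (take j B) x"

lemma zs0: "zs x 0 = x" by (simp add: zs_def)

lemma zsp: "zs x p = pbcd f \<alpha> B x" by (simp add: zs_def pbcd_def)

lemma zsS: "j < p \<Longrightarrow> zs x (Suc j) = block_step f \<alpha> (B!j) (zs x j)"
  by (simp add: zs_def take_Suc_conv_app_nth)

definition K :: real where "K = 1 / (1 - \<alpha> * L)"

lemma K1: "K \<ge> 1" using aL a_pos L_pos by (simp add: K_def field_simps)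

lemma zs_lip: "j \<le> p \<Longrightarrow> norm (zs x j - zs y j) \<le> K^j * norm (x - y)"
proof (induction j)
  case 0 then show ?case by (simp add: zs0)
next
  case (Suc j)
  then have j: "j < p" by simp
  have "norm (zs x (Suc j) - zs y (Suc j)) \<le> norm (zs x j - zs y j) / (1 - \<alpha> * L)"
    unfolding zsS[OF j] by (rule block_lip)
  also have "\<dots> = K * norm (zs x j - zs y j)" by (simp add: K_def)
  also have "\<dots> \<le> K * (K^j * norm (x - y))"
    using Suc j K1 by (intro mult_left_mono) auto
  finally show ?case by simp
qed

lemma fold_fix: "fold (block_step f \<alpha>) l xs = xs"
  by (induction l) (auto simp: block_fixpt[OF crit])

lemma zs_fix: "zs xs j = xs"
  by (simp add: zs_def fold_fix)

lemma pbcd_lip: "norm (pbcd f \<alpha> B x - pbcd f \<alpha> B y) \<le> K^p * norm (x - y)"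
  using zs_lip[of p x y] by (simp add: zsp)

lemma pbcd_fix: "pbcd f \<alpha> B xs = xs"
  using zs_fix[of p] by (simp add: zsp)

lemma zs_ball: "j \<le> p \<Longrightarrow> norm (zs x j - xs) \<le> K^p * norm (x - xs)"
proof -
  assume j: "j \<le> p"
  have "norm (zs x j - xs) \<le> K^j * norm (x - xs)" using zs_lip[OF j, of x xs] by (simp add: zs_fix)
  also have "\<dots> \<le> K^p * norm (x - xs)" using K1 j by (intro mult_right_mono power_increasing) auto
  finally show ?thesis .
qed

lemma vec_ident: "a' = a - c *\<^sub>R u \<Longrightarrow> b' = b - c *\<^sub>R w \<Longrightarrow> a' - b' = (a - b) - c *\<^sub>R (u - (w::'b::real_vector))"
  by (simp add: scaleR_diff_right algebra_simps)

lemma sweep: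
  fixes \<epsilon> \<rho> :: real
  assumes eps: "\<epsilon> \<ge> 0"
    and lz: "\<And>a b. a \<in> cball xs \<rho> \<Longrightarrow> b \<in> cball xs \<rho> \<Longrightarrow>
        norm (gradf a - gradf b - H *v (a - b)) \<le> \<epsilon> * norm (a - b)"
    and x: "K^p * norm (x - xs) \<le> \<rho>" and y: "K^p * norm (y - xs) \<le> \<rho>"
  defines "e \<equiv> (\<lambda>j. zs x j - zs y j)"
    and "r \<equiv> (\<lambda>j. gradf (zs x (Suc j)) - gradf (zs y (Suc j)) - H *v (zs x (Suc j) - zs y (Suc j)))"
  defines "A \<equiv> (\<Sum>j<p. norm (e (Suc j) - e j))"
    and "R \<equiv> (\<Sum>j<p. norm (r j))"
  shows "e p \<bullet> (H *v e p) - e 0 \<bullet> (H *v e 0) \<le> - (2/\<alpha> - L) * (\<Sum>j<p. (norm (e (Suc j) - e j))^2) + 2 * A * R"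
    and "\<And>j. j \<le> p \<Longrightarrow> norm (e j - e 0) \<le> A"
    and "norm (H *v e 0) \<le> (1/\<alpha> + p * L) * A + R"
    and "R \<le> p * \<epsilon> * (norm (e 0) + A)"
proof -
  have step: "e (Suc j) = e j - \<alpha> *\<^sub>R proj (B!j) (H *v e (Suc j) + r j)" if j: "j < p" for j
  proof -
    have "zs x (Suc j) = zs x j - \<alpha> *\<^sub>R proj (B!j) (gradf (zs x (Suc j)))"
      using block_step_fix[of "B!j" "zs x j"] zsS[OF j] by simp
    moreover have "zs y (Suc j) = zs y j - \<alpha> *\<^sub>R proj (B!j) (gradf (zs y (Suc j)))"
      using block_step_fix[of "B!j" "zs y j"] zsS[OF j] by simp
    ultimately have "e (Suc j) = e j - \<alpha> *\<^sub>R (proj (B!j) (gradf (zs x (Suc j))) - proj (B!j) (gradf (zs y (Suc j))))"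
      unfolding e_def using vec_ident by metis
    moreover have "H *v e (Suc j) + r j = gradf (zs x (Suc j)) - gradf (zs y (Suc j))"
      by (simp add: e_def r_def)
    ultimately show ?thesis by (simp add: proj_diff)
  qed
  have rb: "norm (r j) \<le> \<epsilon> * norm (e (Suc j))" if j: "j < p" for j
  proof -
    have "zs x (Suc j) \<in> cball xs \<rho>" using zs_ball[of "Suc j" x] j x by (simp add: dist_norm norm_minus_commute)
    moreover have "zs y (Suc j) \<in> cball xs \<rho>" using zs_ball[of "Suc j" y] j y by (simp add: dist_norm norm_minus_commute)
    ultimately show ?thesis unfolding r_def e_def by (rule lz)
  qed
  have aL0: "L \<ge> 0" using L_pos by simp
  note d = dyn[where H=H and L=L and p=p and Sb="\<lambda>j. B!j" and e=e and \<alpha>=\<alpha> and r=r and \<epsilon>=\<epsilon>, OF Hsym Hb part_norm step rb a_pos aL0 eps]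
  show "e p \<bullet> (H *v e p) - e 0 \<bullet> (H *v e 0) \<le> - (2/\<alpha> - L) * (\<Sum>j<p. (norm (e (Suc j) - e j))^2) + 2 * A * R"
    using d(1) unfolding A_def R_def by simp
  show "\<And>j. j \<le> p \<Longrightarrow> norm (e j - e 0) \<le> A" using d(2) unfolding A_def by simp
  show "norm (H *v e 0) \<le> (1/\<alpha> + p * L) * A + R" using d(3) unfolding A_def R_def by simp
  show "R \<le> p * \<epsilon> * (norm (e 0) + A)" using d(4) unfolding A_def R_def by simp
qed

definition Qf :: "real \<Rightarrow> real^'n \<Rightarrow> real" where
  "Qf \<gamma> v = - (v \<bullet> (H *v v)) - \<gamma> * (norm v)^2"

lemma grow:
  assumes g0: "\<gamma>0 > 0"
  shows "\<exists>\<gamma> c r0. 0 < \<gamma> \<and> \<gamma> \<le> \<gamma>0 \<and> c > 0 \<and> r0 > 0 \<and>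
    (\<forall>x y. x \<in> cball xs r0 \<longrightarrow> y \<in> cball xs r0 \<longrightarrow> Qf \<gamma> (x - y) \<ge> 0 \<longrightarrow>
       Qf \<gamma> (pbcd f \<alpha> B x - pbcd f \<alpha> B y) \<ge> Qf \<gamma> (x - y) + c * (norm (x - y))^2)"
proof -
  define c0 where "c0 = 2/\<alpha> - L"
  have c0: "c0 > 0"
  proof -
    have "L < 1/\<alpha>" using aL a_pos by (simp add: field_simps)
    then show ?thesis using a_pos L_pos by (simp add: c0_def field_simps)
  qed
  define pr where "pr = real p"
  have pr: "pr \<ge> 1" using p_pos by (simp add: pr_def)
  define c1 where "c1 = c0 / pr"
  have c1: "c1 > 0" using c0 pr by (simp add: c1_def)
  obtain C1 where C1: "C1 > 0" "\<And>e. - (e \<bullet> (H *v e)) \<le> C1 * (norm (H *v e))^2"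
    using kernel_bound[OF Hsym] by blast
  define K1 where "K1 = 1/\<alpha> + pr * L"
  have K1nn: "K1 \<ge> 0" using a_pos L_pos pr by (simp add: K1_def)
  define \<theta> where "\<theta> = c1/(8*(4*C1*K1^2+1))"
  define \<gamma> where "\<gamma> = min (min 1 (c1/8)) (min (c1 * \<theta> / 8) \<gamma>0)"
  have "4*C1*K1^2 \<ge> 0" using C1 by simp
  then have cp: "4*C1*K1^2+1 > 0" by linarith
  have th: "\<theta> > 0" using c1 cp by (simp add: \<theta>_def)
  have g: "0 < \<gamma>" "\<gamma> \<le> 1" "\<gamma> \<le> c1/8" "\<gamma> \<le> c1 * (c1/(8*(4*C1*K1^2+1))) / 8" "\<gamma> \<le> \<gamma>0"
    using c1 th g0 unfolding \<gamma>_def \<theta>_def[symmetric] by auto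
  define D where "D = 4*C1*K1^2/\<gamma> + 1"
  have D: "D \<ge> 1" using C1 g by (simp add: D_def)
  define \<epsilon> where "\<epsilon> = min (min 1 (\<gamma>/(8*C1*pr^2))) (c1/(8*pr*(D+3)))"
  have e: "\<epsilon> > 0" "\<epsilon> \<le> 1" "\<epsilon> \<le> \<gamma>/(8*C1*pr^2)" "\<epsilon> \<le> c1/(8*pr*(D+3))"
    using g C1 pr c1 D unfolding \<epsilon>_def by auto
  have e2: "4*C1*pr^2*\<epsilon>^2 \<le> \<gamma>/2"
  proof -
    have "\<epsilon>^2 \<le> \<epsilon>" using e by (simp add: power2_eq_square mult_le_cancel_right1)
    then have "4*C1*pr^2*\<epsilon>^2 \<le> 4*C1*pr^2*\<epsilon>" using C1 by (intro mult_left_mono) auto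
    also have "\<dots> \<le> 4*C1*pr^2*(\<gamma>/(8*C1*pr^2))" using e C1 by (intro mult_left_mono) auto
    also have "\<dots> = \<gamma>/2" using C1 pr by (simp add: field_simps)
    finally show ?thesis .
  qed
  have e3: "pr*\<epsilon>*((4*C1*K1^2/\<gamma> + 1) + 3) \<le> c1/8"
  proof -
    have "pr*\<epsilon>*(D+3) \<le> pr*(c1/(8*pr*(D+3)))*(D+3)"
      using e pr D by (intro mult_right_mono mult_left_mono) auto
    also have "\<dots> = c1/8"
    proof -
      have "pr > 0" "D + 3 > 0" using pr D by auto
      then show ?thesis by (simp add: divide_simps)
    qed
    finally show ?thesis by (simp add: D_def)
  qed
  obtain \<rho> where \<rho>: "\<rho> > 0" "\<And>a b. a \<in> cball xs \<rho> \<Longrightarrow> b \<in> cball xs \<rho> \<Longrightarrow>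
        norm (gradf a - gradf b - H *v (a - b)) \<le> \<epsilon> * norm (a - b)"
    using linz[OF e(1)] by blast
  have Kp: "K^p \<ge> 1" using K1 by simp
  define r0 where "r0 = \<rho> / K^p"
  define c where "c = c1 / (2*(4*C1*K1^2/\<gamma> + 1))"
  have c: "c > 0" using c1 D by (simp add: c_def D_def[symmetric])
  show ?thesis
  proof (rule exI[of _ \<gamma>], rule exI[of _ c], rule exI[of _ r0], intro conjI allI impI)
    show "0 < \<gamma>" using g by auto
    show "\<gamma> \<le> \<gamma>0" using g by auto
    show "c > 0" using c by auto
    show "r0 > 0" using \<rho> Kp by (simp add: r0_def)
    fix x y assume x: "x \<in> cball xs r0" and y: "y \<in> cball xs r0" and q0: "Qf \<gamma> (x - y) \<ge> 0"
    have xK: "K^p * norm (x - xs) \<le> \<rho>" using x Kp by (simp add: r0_def dist_norm norm_minus_commute field_simps)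
    have yK: "K^p * norm (y - xs) \<le> \<rho>" using y Kp by (simp add: r0_def dist_norm norm_minus_commute field_simps)
    define e where "e j = zs x j - zs y j" for j
    define r where "r j = gradf (zs x (Suc j)) - gradf (zs y (Suc j)) - H *v (zs x (Suc j) - zs y (Suc j))" for j
    define A where "A = (\<Sum>j<p. norm (e (Suc j) - e j))"
    define R where "R = (\<Sum>j<p. norm (r j))"
    note sw = sweep[of \<epsilon> \<rho> x y, OF less_imp_le[OF e(1)] \<rho>(2) xK yK, folded e_def r_def, folded A_def R_def]
    have e0: "e 0 = x - y" by (simp add: e_def zs0)
    have ep: "e p = pbcd f \<alpha> B x - pbcd f \<alpha> B y" by (simp add: e_def zsp)
    define X where "X = norm (x - y)"
    define G where "G = Qf \<gamma> (e p) - Qf \<gamma> (e 0)"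
    have A0: "A \<ge> 0" by (simp add: A_def sum_nonneg)
    have R0: "R \<ge> 0" by (simp add: R_def sum_nonneg)
    have X0: "X \<ge> 0" by (simp add: X_def)
    have sq: "A^2 \<le> (\<Sum>j<p. (norm (e (Suc j) - e j))^2) * pr"
      using sum_squared_le_sum_of_squares[of "\<lambda>j. norm (e (Suc j) - e j)" "{..<p}"]
      by (simp add: A_def pr_def)
    have "c1 * A^2 \<le> c0 * (\<Sum>j<p. (norm (e (Suc j) - e j))^2)"
    proof -
      have "c1 * A^2 \<le> c1 * ((\<Sum>j<p. (norm (e (Suc j) - e j))^2) * pr)"
        using sq c1 by (intro mult_left_mono) auto
      also have "\<dots> = c0 * (\<Sum>j<p. (norm (e (Suc j) - e j))^2)"
        using pr by (simp add: c1_def)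
      finally show ?thesis .
    qed
    moreover have "- (2/\<alpha> - L) * (\<Sum>j<p. (norm (e (Suc j) - e j))^2) = - (c0 * (\<Sum>j<p. (norm (e (Suc j) - e j))^2))"
      unfolding c0_def by (rule mult_minus_left)
    ultimately have V1: "- (e p \<bullet> (H *v e p) - e 0 \<bullet> (H *v e 0)) \<ge> c1 * A^2 - 2 * A * R"
      using sw(1) by linarith
    have "norm (e p) \<le> X + A"
      using sw(2)[of p] e0 norm_triangle_ineq[of "e p - e 0" "e 0"] by (simp add: X_def)
    then have "(norm (e p))^2 \<le> (X + A)^2"
      by (intro power_mono) auto
    then have N1: "\<gamma> * ((norm (e p))^2 - X^2) \<le> \<gamma> * (2*X*A + A^2)"
      using g by (intro mult_left_mono) (auto simp: power2_sum)
    have Xe: "X = norm (e 0)" by (simp add: X_def e0)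
    have Geq: "G = - (e p \<bullet> (H *v e p) - e 0 \<bullet> (H *v e 0)) - \<gamma> * ((norm (e p))^2 - X^2)"
      unfolding G_def Qf_def Xe by (simp add: algebra_simps)
    have "\<gamma> * (2*X*A + A^2) = 2*\<gamma>*X*A + \<gamma>*A^2" by (simp add: algebra_simps)
    then have h1: "G \<ge> c1*A^2 - 2*A*R - 2*\<gamma>*X*A - \<gamma>*A^2"
      using V1 N1 Geq by linarith
    have h2: "\<gamma>*X^2 \<le> C1*(K1*A + R)^2"
    proof -
      have "\<gamma>*X^2 \<le> - (e 0 \<bullet> (H *v e 0))" using q0 e0 by (simp add: Qf_def X_def)
      also have "\<dots> \<le> C1 * (norm (H *v e 0))^2" by (rule C1(2))
      also have "\<dots> \<le> C1 * (K1*A + R)^2"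
        using sw(3) C1 by (intro mult_left_mono power_mono) (auto simp: K1_def pr_def)
      finally show ?thesis .
    qed
    have h3: "R \<le> pr*\<epsilon>*(X + A)" using sw(4) e0 by (simp add: pr_def X_def)
    have "G \<ge> c * X^2"
      using alg[OF A0 R0 X0 C1(1) K1nn pr c1 h1 h2 h3 g(1-4) less_imp_le[OF e(1)] e2 e3]
      by (simp add: c_def)
    then show "Qf \<gamma> (pbcd f \<alpha> B x - pbcd f \<alpha> B y) \<ge> Qf \<gamma> (x - y) + c * (norm (x - y))^2"
      unfolding G_def X_def using e0 ep by simp
  qed
qed

lemma Qf_le: "\<gamma> \<ge> 0 \<Longrightarrow> Qf \<gamma> v \<le> L * (norm v)^2"
proof -
  assume g: "\<gamma> \<ge> 0"
  have "- (v \<bullet> (H *v v)) \<le> norm v * norm (H *v v)"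
    using Cauchy_Schwarz_ineq2[of v "H *v v"] by linarith
  also have "\<dots> \<le> norm v * (L * norm v)" by (intro mult_left_mono Hb) auto
  finally have "- (v \<bullet> (H *v v)) \<le> L * (norm v)^2" by (simp add: power2_eq_square algebra_simps)
  moreover have "\<gamma> * (norm v)^2 \<ge> 0" using g by simp
  ultimately show ?thesis by (simp add: Qf_def)
qed

definition Wset :: "real \<Rightarrow> (real^'n) set" where
  "Wset r0 = {x. \<forall>k. (pbcd f \<alpha> B ^^ k) x \<in> cball xs r0}"

lemma W_pairs:
  assumes g: "0 < \<gamma>" and c: "c > 0" and r0: "r0 > 0"
    and gr: "\<forall>x y. x \<in> cball xs r0 \<longrightarrow> y \<in> cball xs r0 \<longrightarrow> Qf \<gamma> (x - y) \<ge> 0 \<longrightarrow>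
       Qf \<gamma> (pbcd f \<alpha> B x - pbcd f \<alpha> B y) \<ge> Qf \<gamma> (x - y) + c * (norm (x - y))^2"
    and x: "x \<in> Wset r0" and y: "y \<in> Wset r0"
  shows "Qf \<gamma> (x - y) \<le> 0"
proof (rule ccontr)
  assume "\<not> Qf \<gamma> (x - y) \<le> 0"
  then have Q0: "Qf \<gamma> (x - y) > 0" by simp
  define F where "F = pbcd f \<alpha> B"
  define e where "e k = (F ^^ k) x - (F ^^ k) y" for k
  define q where "q = Qf \<gamma> (x - y)"
  have xk: "(F ^^ k) x \<in> cball xs r0" for k using x by (simp add: Wset_def F_def)
  have yk: "(F ^^ k) y \<in> cball xs r0" for k using y by (simp add: Wset_def F_def)
  have ind: "Qf \<gamma> (e k) \<ge> q + k * (c / L) * q" for k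
  proof (induction k)
    case 0 then show ?case by (simp add: e_def q_def)
  next
    case (Suc k)
    have qk: "Qf \<gamma> (e k) \<ge> q" using Suc Q0 c L_pos by (simp add: q_def) (smt (verit) mult_nonneg_nonneg of_nat_0_le_iff divide_nonneg_nonneg)
    have "Qf \<gamma> (e (Suc k)) \<ge> Qf \<gamma> (e k) + c * (norm (e k))^2"
      using gr xk[of k] yk[of k] qk Q0 by (simp add: e_def F_def q_def)
    moreover have "(norm (e k))^2 \<ge> q / L"
    proof -
      have "q \<le> L * (norm (e k))^2" using qk Qf_le[of \<gamma> "e k"] g by simp
      then show ?thesis using L_pos by (simp add: field_simps)
    qed
    ultimately have "Qf \<gamma> (e (Suc k)) \<ge> Qf \<gamma> (e k) + c * (q / L)"
      using c by (smt (verit) mult_left_mono)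
    then show ?case using Suc by (simp add: algebra_simps)
  qed
  have bnd: "Qf \<gamma> (e k) \<le> L * (2*r0)^2" for k
  proof -
    have "norm (e k) \<le> 2 * r0"
    proof -
      have "norm (e k) \<le> dist ((F ^^ k) x) xs + dist xs ((F ^^ k) y)"
        unfolding e_def dist_norm using norm_triangle_ineq[of "(F ^^ k) x - xs" "xs - (F ^^ k) y"] by simp
      also have "\<dots> \<le> r0 + r0" using xk[of k] yk[of k] by (intro add_mono) (auto simp: dist_commute)
      finally show ?thesis by simp
    qed
    then have "(norm (e k))^2 \<le> (2*r0)^2" by (intro power_mono) auto
    then have "L * (norm (e k))^2 \<le> L * (2*r0)^2" using L_pos by simp
    then show ?thesis using Qf_le[of \<gamma> "e k"] g by simp
  qed
  have pos: "(c / L) * q > 0" using c L_pos Q0 by (simp add: q_def)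
  obtain k :: nat where k: "L * (2*r0)^2 < k * ((c / L) * q)"
    using reals_Archimedean3[OF pos] by blast
  have "q + k * (c / L) * q \<le> L * (2*r0)^2" using ind[of k] bnd[of k] by simp
  then show False using k Q0 by (simp add: q_def algebra_simps)
qed

end

context pb2
begin

lemma cone_bound:
  assumes u1: "u \<bullet> u = 1" and Hu: "H *v u = ce *\<^sub>R u" and g: "0 \<le> \<gamma>" and den: "- ce - \<gamma> > 0"
    and Q: "Qf \<gamma> d \<le> 0"
  shows "norm d \<le> (1 + sqrt ((L + \<gamma>) / (- ce - \<gamma>))) * norm (d - (d \<bullet> u) *\<^sub>R u)"
proof -
  define t where "t = d \<bullet> u"
  define w where "w = d - t *\<^sub>R u"
  have d: "d = t *\<^sub>R u + w" by (simp add: w_def)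
  have wu: "w \<bullet> u = 0" by (simp add: w_def t_def inner_diff_left u1)
  have uHw: "u \<bullet> (H *v w) = 0" using Hsym[of u w] Hu wu by (simp add: inner_commute)
  have dHd: "d \<bullet> (H *v d) = t^2 * ce + w \<bullet> (H *v w)"
    unfolding d using uHw wu u1
    by (simp add: matrix_vector_right_distrib matrix_vector_mult_scaleR Hu inner_add_left inner_add_right
        inner_commute power2_eq_square)
  have nd: "(norm d)^2 = t^2 + (norm w)^2"
  proof -
    have "(norm d)^2 = d \<bullet> d" by (rule power2_norm_eq_inner)
    also have "\<dots> = t^2 + w \<bullet> w" unfolding d using wu u1
      by (simp add: inner_add_left inner_add_right inner_commute power2_eq_square)
    also have "w \<bullet> w = (norm w)^2" by (simp add: power2_norm_eq_inner)
    finally show ?thesis .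
  qed
  have "t^2 * (- ce - \<gamma>) \<le> w \<bullet> (H *v w) + \<gamma> * (norm w)^2"
    using Q dHd nd by (simp add: Qf_def algebra_simps)
  also have "w \<bullet> (H *v w) \<le> L * (norm w)^2"
  proof -
    have "w \<bullet> (H *v w) \<le> norm w * norm (H *v w)" using Cauchy_Schwarz_ineq2[of w "H *v w"] by linarith
    also have "\<dots> \<le> norm w * (L * norm w)" by (intro mult_left_mono Hb) auto
    finally show ?thesis by (simp add: power2_eq_square algebra_simps)
  qed
  finally have "t^2 * (- ce - \<gamma>) \<le> (L + \<gamma>) * (norm w)^2" by (simp add: algebra_simps)
  then have t2: "t^2 \<le> ((L + \<gamma>) / (- ce - \<gamma>)) * (norm w)^2"
    using den by (simp add: field_simps)
  have "\<bar>t\<bar> = sqrt (t^2)" by simp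
  also have "\<dots> \<le> sqrt (((L + \<gamma>) / (- ce - \<gamma>)) * (norm w)^2)" using t2 by (rule real_sqrt_le_mono)
  also have "\<dots> = sqrt ((L + \<gamma>) / (- ce - \<gamma>)) * norm w" by (simp only: real_sqrt_mult real_sqrt_abs abs_norm_cancel)
  finally have tb: "\<bar>t\<bar> \<le> sqrt ((L + \<gamma>) / (- ce - \<gamma>)) * norm w" .
  have "norm d \<le> norm (t *\<^sub>R u) + norm w" unfolding d by (rule norm_triangle_ineq)
  also have "norm (t *\<^sub>R u) = \<bar>t\<bar>" using u1 by (simp add: norm_eq_sqrt_inner)
  finally show ?thesis using tb by (simp add: w_def t_def algebra_simps)
qed

lemma W_negl:
  assumes saddle: "lambda_min H < 0"
  shows "\<exists>r0>0. negligible (Wset r0)"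
proof -
  obtain ce v where ce: "ce < 0" and v: "v \<noteq> 0" and Hv: "H *v v = ce *\<^sub>R v"
    using neg_eig[OF Hsym saddle] by blast
  obtain \<gamma> c r0 where g: "0 < \<gamma>" "\<gamma> \<le> - ce / 2" and c: "c > 0" and r0: "r0 > 0"
    and gr: "\<forall>x y. x \<in> cball xs r0 \<longrightarrow> y \<in> cball xs r0 \<longrightarrow> Qf \<gamma> (x - y) \<ge> 0 \<longrightarrow>
       Qf \<gamma> (pbcd f \<alpha> B x - pbcd f \<alpha> B y) \<ge> Qf \<gamma> (x - y) + c * (norm (x - y))^2"
    using grow[of "- ce / 2"] ce by auto
  define u where "u = v /\<^sub>R norm v"
  have u1: "u \<bullet> u = 1"
  proof -
    have "norm u = 1" using v by (simp add: u_def)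
    then show ?thesis by (simp add: norm_eq_1)
  qed
  have Hu: "H *v u = ce *\<^sub>R u" using Hv by (simp add: u_def matrix_vector_mult_scaleR)
  have den: "- ce - \<gamma> > 0" using g ce by linarith
  define M where "M = 1 + sqrt ((L + \<gamma>) / (- ce - \<gamma>))"
  define \<pi> where "\<pi> z = z - (z \<bullet> u) *\<^sub>R u" for z
  let ?W = "Wset r0"
  have key: "norm (x - y) \<le> M * norm (\<pi> x - \<pi> y)" if "x \<in> ?W" "y \<in> ?W" for x y
  proof -
    have "Qf \<gamma> (x - y) \<le> 0" using W_pairs[OF g(1) c r0 gr that] .
    then have "norm (x - y) \<le> M * norm ((x - y) - ((x - y) \<bullet> u) *\<^sub>R u)"
      unfolding M_def by (rule cone_bound[OF u1 Hu less_imp_le[OF g(1)] den])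
    also have "(x - y) - ((x - y) \<bullet> u) *\<^sub>R u = \<pi> x - \<pi> y"
      by (simp add: \<pi>_def inner_diff_left algebra_simps)
    finally show ?thesis .
  qed
  define gi where "gi = inv_into ?W \<pi>"
  have hyp: "\<pi> ` ?W \<subseteq> {z. u \<bullet> z = 0}"
    using u1 by (auto simp: \<pi>_def inner_diff_right inner_commute)
  have neg0: "negligible (\<pi> ` ?W)"
  proof -
    have "u \<noteq> 0" using u1 by auto
    then show ?thesis using negligible_subset[OF negligible_hyperplane[of u 0] hyp] by blast
  qed
  have "negligible (gi ` (\<pi> ` ?W))"
  proof (rule negligible_locally_Lipschitz_image[OF order_refl neg0])
    fix z assume z: "z \<in> \<pi> ` ?W"
    show "\<exists>T B. open T \<and> z \<in> T \<and> (\<forall>y\<in>\<pi> ` ?W \<inter> T. norm (gi y - gi z) \<le> B * norm (y - z))"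
    proof (intro exI[of _ UNIV] exI[of _ M] conjI ballI)
      fix y assume y: "y \<in> \<pi> ` ?W \<inter> UNIV"
      have "gi y \<in> ?W" "gi z \<in> ?W" using y z by (auto simp: gi_def inv_into_into)
      moreover have "\<pi> (gi y) = y" "\<pi> (gi z) = z" using y z by (auto simp: gi_def f_inv_into_f)
      ultimately show "norm (gi y - gi z) \<le> M * norm (y - z)" using key by metis
    qed auto
  qed
  moreover have "?W \<subseteq> gi ` (\<pi> ` ?W)"
  proof
    fix x assume x: "x \<in> ?W"
    have gx: "gi (\<pi> x) \<in> ?W" "\<pi> (gi (\<pi> x)) = \<pi> x" using x by (auto simp: gi_def inv_into_into f_inv_into_f)
    have "norm (gi (\<pi> x) - x) \<le> M * norm (\<pi> (gi (\<pi> x)) - \<pi> x)" using key[OF gx(1) x] .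
    then have "gi (\<pi> x) = x" using gx(2) by simp
    then show "x \<in> gi ` (\<pi> ` ?W)" using x by (metis imageI)
  qed
  ultimately show ?thesis using r0 negligible_subset by blast
qed

end

context pb2
begin

definition Psi :: "real^'n \<Rightarrow> real^'n" where "Psi = foldr psi B"

lemma foldr_psi: "foldr psi l (fold (block_step f \<alpha>) l x) = x"
  by (induction l arbitrary: x) (auto simp: psi_block)

lemma Psi_pbcd: "Psi (pbcd f \<alpha> B x) = x"
  by (simp add: Psi_def pbcd_def foldr_psi)

lemma foldr_psi_lip: "norm (foldr psi l x - foldr psi l y) \<le> (1 + \<alpha> * L)^length l * norm (x - y)"
proof (induction l)
  case Nil then show ?case by simp
next
  case (Cons S l)
  have "norm (foldr psi (S # l) x - foldr psi (S # l) y) \<le> (1 + \<alpha> * L) * norm (foldr psi l x - foldr psi l y)"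
    by (simp add: psi_lip)
  also have "\<dots> \<le> (1 + \<alpha> * L) * ((1 + \<alpha> * L)^length l * norm (x - y))"
    using Cons a_pos L_pos by (intro mult_left_mono) auto
  finally show ?case by simp
qed

lemma Psi_pow_lip: "norm ((Psi ^^ N) x - (Psi ^^ N) y) \<le> ((1 + \<alpha> * L)^p)^N * norm (x - y)"
proof (induction N)
  case 0 then show ?case by simp
next
  case (Suc N)
  have "norm ((Psi ^^ Suc N) x - (Psi ^^ Suc N) y) \<le> (1 + \<alpha> * L)^p * norm ((Psi ^^ N) x - (Psi ^^ N) y)"
    using foldr_psi_lip by (simp add: Psi_def)
  also have "\<dots> \<le> (1 + \<alpha> * L)^p * (((1 + \<alpha> * L)^p)^N * norm (x - y))"
    using Suc a_pos L_pos by (intro mult_left_mono) auto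
  finally show ?case by simp
qed

lemma Psi_pow_pbcd: "(Psi ^^ N) ((pbcd f \<alpha> B ^^ N) x) = x"
proof (induction N arbitrary: x)
  case 0 then show ?case by simp
next
  case (Suc N)
  have "(Psi ^^ Suc N) ((pbcd f \<alpha> B ^^ Suc N) x) = (Psi ^^ N) (Psi ((pbcd f \<alpha> B ^^ Suc N) x))"
    by (simp only: funpow_Suc_right comp_def)
  also have "Psi ((pbcd f \<alpha> B ^^ Suc N) x) = (pbcd f \<alpha> B ^^ N) x"
    by (simp add: Psi_pbcd)
  finally show ?case using Suc by simp
qed

lemma negl_pow_image: "negligible S \<Longrightarrow> negligible ((Psi ^^ N) ` S)"
proof -
  assume "negligible S"
  then show ?thesis
  proof (rule negligible_locally_Lipschitz_image[OF order_refl])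
    fix x assume "x \<in> S"
    show "\<exists>T B. open T \<and> x \<in> T \<and> (\<forall>y\<in>S \<inter> T. norm ((Psi ^^ N) y - (Psi ^^ N) x) \<le> B * norm (y - x))"
      using Psi_pow_lip by blast
  qed
qed

lemma pbcd_cont: "continuous_on UNIV (pbcd f \<alpha> B)"
proof (rule continuous_onI)
  fix x and e :: real assume e: "e > 0"
  have Kp: "K^p \<ge> 1" using K1 by simp
  show "\<exists>d>0. \<forall>x'\<in>UNIV. dist x' x < d \<longrightarrow> dist (pbcd f \<alpha> B x') (pbcd f \<alpha> B x) \<le> e"
  proof (intro exI[of _ "e / K^p"] conjI ballI impI)
    show "e / K^p > 0" using e Kp by simp
    fix x' assume "dist x' x < e / K^p"
    then have "K^p * dist x' x \<le> e" using Kp by (simp add: field_simps)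
    moreover have "dist (pbcd f \<alpha> B x') (pbcd f \<alpha> B x) \<le> K^p * dist x' x"
      using pbcd_lip by (simp add: dist_norm)
    ultimately show "dist (pbcd f \<alpha> B x') (pbcd f \<alpha> B x) \<le> e" by linarith
  qed
qed

lemma pow_cont: "continuous_on UNIV (pbcd f \<alpha> B ^^ k)"
  by (induction k) (auto intro: continuous_on_compose2[OF pbcd_cont] simp: continuous_on_id)

lemma conv_negl:
  assumes saddle: "lambda_min H < 0"
  shows "negligible {x0. (\<lambda>k. (pbcd f \<alpha> B ^^ k) x0) \<longlonglongrightarrow> xs}"
proof -
  obtain r0 where r0: "r0 > 0" and nW: "negligible (Wset r0)" using W_negl[OF saddle] by blast
  have "{x0. (\<lambda>k. (pbcd f \<alpha> B ^^ k) x0) \<longlonglongrightarrow> xs} \<subseteq> (\<Union>N. (Psi ^^ N) ` Wset r0)"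
  proof
    fix x0 assume "x0 \<in> {x0. (\<lambda>k. (pbcd f \<alpha> B ^^ k) x0) \<longlonglongrightarrow> xs}"
    then have "(\<lambda>k. (pbcd f \<alpha> B ^^ k) x0) \<longlonglongrightarrow> xs" by simp
    then obtain N where N: "\<And>k. k \<ge> N \<Longrightarrow> dist ((pbcd f \<alpha> B ^^ k) x0) xs < r0"
      using r0 unfolding lim_sequentially by blast
    define y where "y = (pbcd f \<alpha> B ^^ N) x0"
    have "y \<in> Wset r0"
      unfolding Wset_def
    proof (safe)
      fix k
      have "(pbcd f \<alpha> B ^^ k) y = (pbcd f \<alpha> B ^^ (k + N)) x0" by (simp add: y_def funpow_add)
      then show "(pbcd f \<alpha> B ^^ k) y \<in> cball xs r0" using N[of "k + N"] by (simp add: dist_commute)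
    qed
    moreover have "x0 = (Psi ^^ N) y" by (simp add: y_def Psi_pow_pbcd)
    ultimately show "x0 \<in> (\<Union>N. (Psi ^^ N) ` Wset r0)" by blast
  qed
  moreover have "negligible (\<Union>N. (Psi ^^ N) ` Wset r0)"
    by (rule negligible_Union_nat) (rule negl_pow_image[OF nW])
  ultimately show ?thesis using negligible_subset by blast
qed

lemma conv_borel: "{x0. (\<lambda>k. (pbcd f \<alpha> B ^^ k) x0) \<longlonglongrightarrow> xs} \<in> sets borel"
proof -
  define F where "F k = (pbcd f \<alpha> B ^^ k)" for k
  have Fm[measurable]: "F k \<in> borel_measurable borel" for k
    unfolding F_def by (rule borel_measurable_continuous_onI[OF pow_cont])
  have eq: "{x0. (\<lambda>k. (pbcd f \<alpha> B ^^ k) x0) \<longlonglongrightarrow> xs} =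
      {x \<in> space borel. \<forall>m::nat. eventually (\<lambda>k. dist (F k x) xs < inverse (Suc m)) sequentially}"
  proof (safe)
    fix x m assume "(\<lambda>k. (pbcd f \<alpha> B ^^ k) x) \<longlonglongrightarrow> xs"
    then show "eventually (\<lambda>k. dist (F k x) xs < inverse (Suc m)) sequentially"
      unfolding tendsto_iff F_def by simp
  next
    fix x assume a: "\<forall>m::nat. eventually (\<lambda>k. dist (F k x) xs < inverse (Suc m)) sequentially"
    show "(\<lambda>k. (pbcd f \<alpha> B ^^ k) x) \<longlonglongrightarrow> xs"
      unfolding tendsto_iff
    proof (intro allI impI)
      fix r :: real assume "r > 0"
      then obtain n :: nat where n: "n > 0" "inverse (real n) < r" using ex_inverse_of_nat_less by blast
      define m where "m = n - 1"
      have m: "inverse (real (Suc m)) < r" using n by (simp add: m_def)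
      show "eventually (\<lambda>k. dist ((pbcd f \<alpha> B ^^ k) x) xs < r) sequentially"
        using a[rule_format, of m] by (rule eventually_mono) (use m in \<open>auto simp: F_def\<close>)
    qed
  qed auto
  show ?thesis unfolding eq by measurable
qed

end

theorem theorem6:
  fixes f :: "real^'n::finite \<Rightarrow> real"
    and gradf :: "real^'n \<Rightarrow> real^'n"
    and hessf :: "real^'n \<Rightarrow> real^'n^'n"
    and L \<alpha> :: real
    and B :: "'n set list"
    and xs :: "real^'n"
    and \<nu> :: "(real^'n) measure"
  assumes grad: "\<And>x. (f has_derivative (\<lambda>h. gradf x \<bullet> h)) (at x)"
    and hess: "\<And>x. (gradf has_derivative (\<lambda>h. hessf x *v h)) (at x)"
    and hess_cont: "continuous_on UNIV hessf"
    and L_pos: "L > 0"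
    and lip: "\<And>x y. norm (gradf x - gradf y) \<le> L * norm (x - y)"
    and part: "block_partition B"
    and step: "0 < \<alpha>" "\<alpha> < 1 / L"
    and crit: "gradf xs = 0"
    and saddle: "lambda_min (hessf xs) < 0"
    and prob: "prob_space \<nu>"
    and sets_nu: "sets \<nu> = sets borel"
    and ac: "absolutely_continuous lborel \<nu>"
  shows "{x0. (\<lambda>k. (pbcd f \<alpha> B ^^ k) x0) \<longlonglongrightarrow> xs} \<in> null_sets \<nu>"
proof -
  have aL: "\<alpha> * L < 1" using step L_pos by (simp add: field_simps)
  interpret pb2 f gradf L \<alpha> hessf B xs
    by unfold_locales (use grad L_pos lip step aL hess hess_cont part crit in auto)
  let ?C = "{x0. (\<lambda>k. (pbcd f \<alpha> B ^^ k) x0) \<longlonglongrightarrow> xs}"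
  have "negligible ?C" using conv_negl saddle by blast
  then have "?C \<in> null_sets lebesgue" by (simp add: negligible_iff_null_sets)
  moreover have "?C \<in> sets lborel" using conv_borel by simp
  ultimately have "?C \<in> null_sets lborel" using null_sets_completion_iff by blast
  then show ?thesis using ac unfolding absolutely_continuous_def by blast
qed

end
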